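(* Let $G$ be a connected block graph with center $C$, and let $d=\mathrm{diam}(G)\ge 2$. Then $\chi_{\mu_{d-1}}(G)=\chi_{\mu}(G)$ if and only if $\deg^\ast(C)\le \left\lceil \frac{d+1}{2}\right\rceil$.
   Context: A block of $G$ is a maximal connected subgraph without a cut-vertex; $G$ is a block graph if all its blocks are cliques. The eccentricity of $v$ is $\epsilon_G(v)=\max_u d_G(u,v)$, the radius $\mathrm{rad}(G)$ is the minimum eccentricity, and the center $C$ is the set of vertices of minimum eccentricity (in a block graph it induces a clique). A vertex $u$ is a radial vertex if $d_G(u,x)=\mathrm{rad}(G)$ for some $x\in C$. If $|C|\ge 2$, $\deg^\ast(C)$ is the number of components of $G-E(G[C])$ that contain a radial vertex; if $C=\{c\}$ and $F$ is the set of edges incident with $c$, $\deg^\ast(C)$ is the number of components of $G-F$ containing a radial vertex. A set $M\subseteq V(G)$ is a mutual-visibility set if for every $u,v\in M$ there is a shortest $u,v$-path none of whose internal vertices lies in $M$; it is a $k$-distance mutual-visibility set if moreover such a path can be chosen of length at most $k$. $\chi_\mu(G)$ (resp. $\chi_{\mu_k}(G)$) is the minimum cardinality of a partition of $V(G)$ into mutual-visibility sets (resp. $k$-distance mutual-visibility sets). *)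

theory Defs
  imports Complex_Main "HOL-Library.Disjoint_Sets"
begin

definition graph :: "'a set \<Rightarrow> 'a set set \<Rightarrow> bool" where
  "graph V E \<longleftrightarrow> finite V \<and> (\<forall>e\<in>E. \<exists>u v. e = {u, v} \<and> u \<noteq> v \<and> u \<in> V \<and> v \<in> V)"

definition walk_in :: "'a set \<Rightarrow> 'a set set \<Rightarrow> 'a list \<Rightarrow> bool" where
  "walk_in S E xs \<longleftrightarrow> xs \<noteq> [] \<and> set xs \<subseteq> S \<and>
     (\<forall>i. Suc i < length xs \<longrightarrow> {xs ! i, xs ! Suc i} \<in> E)"

definition walk_betw :: "'a set \<Rightarrow> 'a set set \<Rightarrow> 'a \<Rightarrow> 'a list \<Rightarrow> 'a \<Rightarrow> bool" where
  "walk_betw S E u xs v \<longleftrightarrow> walk_in S E xs \<and> hd xs = u \<and> last xs = v"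

text \<open>Connectedness of the subgraph induced by S (the empty set is vacuously connected).\<close>
definition connected_on :: "'a set \<Rightarrow> 'a set set \<Rightarrow> bool" where
  "connected_on S E \<longleftrightarrow> (\<forall>u\<in>S. \<forall>v\<in>S. \<exists>xs. walk_betw S E u xs v)"

definition connected_graph :: "'a set \<Rightarrow> 'a set set \<Rightarrow> bool" where
  "connected_graph V E \<longleftrightarrow> graph V E \<and> V \<noteq> {} \<and> connected_on V E"

definition nonseparable :: "'a set \<Rightarrow> 'a set set \<Rightarrow> bool" where
  "nonseparable B E \<longleftrightarrow> B \<noteq> {} \<and> connected_on B E \<and> (\<forall>x\<in>B. connected_on (B - {x}) E)"

text \<open>A block: vertex set of a maximal connected subgraph without a cut-vertex
  (such maximal subgraphs are induced).\<close>
definition is_block :: "'a set \<Rightarrow> 'a set set \<Rightarrow> 'a set \<Rightarrow> bool" where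
  "is_block V E B \<longleftrightarrow> B \<subseteq> V \<and> nonseparable B E \<and>
     (\<forall>B'. B \<subset> B' \<and> B' \<subseteq> V \<longrightarrow> \<not> nonseparable B' E)"

definition is_clique :: "'a set set \<Rightarrow> 'a set \<Rightarrow> bool" where
  "is_clique E B \<longleftrightarrow> (\<forall>u\<in>B. \<forall>v\<in>B. u \<noteq> v \<longrightarrow> {u, v} \<in> E)"

definition block_graph :: "'a set \<Rightarrow> 'a set set \<Rightarrow> bool" where
  "block_graph V E \<longleftrightarrow> graph V E \<and> (\<forall>B. is_block V E B \<longrightarrow> is_clique E B)"

definition dist :: "'a set \<Rightarrow> 'a set set \<Rightarrow> 'a \<Rightarrow> 'a \<Rightarrow> nat" where
  "dist V E u v = (LEAST n. \<exists>xs. walk_betw V E u xs v \<and> length xs = Suc n)"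

definition ecc :: "'a set \<Rightarrow> 'a set set \<Rightarrow> 'a \<Rightarrow> nat" where
  "ecc V E v = Max ((\<lambda>u. dist V E u v) ` V)"

definition rad :: "'a set \<Rightarrow> 'a set set \<Rightarrow> nat" where
  "rad V E = Min (ecc V E ` V)"

definition diam :: "'a set \<Rightarrow> 'a set set \<Rightarrow> nat" where
  "diam V E = Max (ecc V E ` V)"

definition center :: "'a set \<Rightarrow> 'a set set \<Rightarrow> 'a set" where
  "center V E = {v\<in>V. ecc V E v = rad V E}"

definition radial :: "'a set \<Rightarrow> 'a set set \<Rightarrow> 'a \<Rightarrow> bool" where
  "radial V E u \<longleftrightarrow> u \<in> V \<and> (\<exists>x\<in>center V E. dist V E u x = rad V E)"

definition components :: "'a set \<Rightarrow> 'a set set \<Rightarrow> 'a set set" where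
  "components V E' = (\<lambda>u. {v\<in>V. \<exists>xs. walk_betw V E' u xs v}) ` V"

definition deg_star_center :: "'a set \<Rightarrow> 'a set set \<Rightarrow> nat" where
  "deg_star_center V E =
     (let C = center V E;
          E' = (if card C \<ge> 2 then E - {e\<in>E. e \<subseteq> C}
                else E - {e\<in>E. \<exists>c\<in>C. c \<in> e})
      in card {K \<in> components V E'. \<exists>u\<in>K. radial V E u})"

definition shortest_path :: "'a set \<Rightarrow> 'a set set \<Rightarrow> 'a \<Rightarrow> 'a list \<Rightarrow> 'a \<Rightarrow> bool" where
  "shortest_path V E u xs v \<longleftrightarrow> walk_betw V E u xs v \<and> length xs = Suc (dist V E u v)"

definition internal :: "'a list \<Rightarrow> 'a set" where
  "internal xs = set (butlast (tl xs))"

definition mutual_visibility_set :: "'a set \<Rightarrow> 'a set set \<Rightarrow> 'a set \<Rightarrow> bool" where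
  "mutual_visibility_set V E M \<longleftrightarrow> M \<subseteq> V \<and>
     (\<forall>u\<in>M. \<forall>v\<in>M. \<exists>xs. shortest_path V E u xs v \<and> internal xs \<inter> M = {})"

definition k_dist_mutual_visibility_set :: "nat \<Rightarrow> 'a set \<Rightarrow> 'a set set \<Rightarrow> 'a set \<Rightarrow> bool" where
  "k_dist_mutual_visibility_set k V E M \<longleftrightarrow> M \<subseteq> V \<and>
     (\<forall>u\<in>M. \<forall>v\<in>M. \<exists>xs. shortest_path V E u xs v \<and> internal xs \<inter> M = {}
        \<and> length xs \<le> Suc k)"

definition chi_mu :: "'a set \<Rightarrow> 'a set set \<Rightarrow> nat" where
  "chi_mu V E = (LEAST n. \<exists>P. partition_on V P \<and> finite P \<and> card P = n \<and>
      (\<forall>M\<in>P. mutual_visibility_set V E M))"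

definition chi_mu_k :: "nat \<Rightarrow> 'a set \<Rightarrow> 'a set set \<Rightarrow> nat" where
  "chi_mu_k k V E = (LEAST n. \<exists>P. partition_on V P \<and> finite P \<and> card P = n \<and>
      (\<forall>M\<in>P. k_dist_mutual_visibility_set k V E M))"

end

theory Submission
  imports Defs
begin

lemma walk_in_succ:
  "walk_in S E xs \<longleftrightarrow> xs \<noteq> [] \<and> set xs \<subseteq> S \<and> successively (\<lambda>x y. {x,y} \<in> E) xs"
  by (simp add: walk_in_def successively_conv_nth)

lemma walk_single[simp]: "walk_in S E [x] \<longleftrightarrow> x \<in> S"
  by (simp add: walk_in_succ)

lemma walk_betw_single: "x \<in> S \<Longrightarrow> walk_betw S E x [x] x"
  by (simp add: walk_betw_def)

lemma walk_append:
  assumes "walk_betw S E u xs w" "walk_betw S E w ys v"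
  shows "walk_betw S E u (xs @ tl ys) v"
proof -
  have ne: "xs \<noteq> []" "ys \<noteq> []" using assms by (auto simp: walk_betw_def walk_in_succ)
  then obtain y ys' where ys: "ys = y # ys'" by (cases ys) auto
  have yw: "y = w" using assms(2) ys by (simp add: walk_betw_def)
  have lx: "last xs = w" using assms(1) by (simp add: walk_betw_def)
  have s1: "successively (\<lambda>x y. {x,y} \<in> E) xs" "successively (\<lambda>x y. {x,y} \<in> E) (y # ys')"
    using assms ys by (auto simp: walk_betw_def walk_in_succ)
  then have s2: "successively (\<lambda>x y. {x,y} \<in> E) ys'" "ys' \<noteq> [] \<longrightarrow> {y, hd ys'} \<in> E"
    by (auto simp: successively_Cons)
  have "successively (\<lambda>x y. {x,y} \<in> E) (xs @ ys')"
    using s1(1) s2 ne lx yw by (auto simp: successively_append_iff)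
  moreover have "set (xs @ ys') \<subseteq> S" using assms ys by (auto simp: walk_betw_def walk_in_succ)
  moreover have "hd (xs @ ys') = u" using assms ne by (simp add: walk_betw_def)
  moreover have "last (xs @ ys') = v" using assms ys yw lx ne by (auto simp: walk_betw_def)
  ultimately show ?thesis using ne ys by (simp add: walk_betw_def walk_in_succ)
qed

lemma length_append_tl: "ys \<noteq> [] \<Longrightarrow> length (xs @ tl ys) = length xs + length ys - 1"
  by (cases ys) auto

lemma walk_rev:
  assumes "walk_betw S E u xs v" shows "walk_betw S E v (rev xs) u"
proof -
  have "successively (\<lambda>x y. {x,y} \<in> E) xs" using assms by (auto simp: walk_betw_def walk_in_succ)
  then have "successively (\<lambda>x y. {y,x} \<in> E) xs" by (simp add: insert_commute)
  then show ?thesis using assms by (auto simp: walk_betw_def walk_in_succ hd_rev last_rev)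
qed

lemma walk_in_mono: "walk_in S E xs \<Longrightarrow> set xs \<subseteq> S' \<Longrightarrow> walk_in S' E xs"
  by (simp add: walk_in_def)

lemma walk_in_take_drop:
  assumes "walk_in S E xs" "i \<le> j" "j < length xs"
  shows "walk_betw S E (xs!i) (take (Suc j - i) (drop i xs)) (xs!j)"
proof -
  let ?ys = "take (Suc j - i) (drop i xs)"
  have s: "successively (\<lambda>x y. {x,y} \<in> E) xs" using assms by (auto simp: walk_in_succ)
  have s1: "successively (\<lambda>x y. {x,y} \<in> E) (drop i xs)"
    using s successively_append_iff[of _ "take i xs" "drop i xs"] by simp
  have s2: "successively (\<lambda>x y. {x,y} \<in> E) ?ys"
    using s1 successively_append_iff[of _ ?ys "drop (Suc j - i) (drop i xs)"] by (simp del: drop_drop)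
  have len: "length ?ys = Suc j - i" using assms by simp
  have ne: "?ys \<noteq> []" using assms by simp
  have "set ?ys \<subseteq> set xs" using set_take_subset[of "Suc j - i" "drop i xs"] set_drop_subset[of i xs] by blast
  then have "set ?ys \<subseteq> S" using assms by (auto simp: walk_in_succ)
  moreover have "hd ?ys = xs!i" using assms by (simp add: hd_conv_nth)
  moreover have "last ?ys = xs!j" using assms ne len by (simp add: last_conv_nth)
  ultimately show ?thesis using s2 ne unfolding walk_betw_def walk_in_succ by blast
qed

lemma set_take_drop_nth:
  assumes "z \<in> set (take (Suc j - i) (drop i xs))" "j < length xs"
  shows "\<exists>m. i \<le> m \<and> m \<le> j \<and> z = xs ! m"
proof -
  obtain p where p: "p < length (take (Suc j - i) (drop i xs))" "z = take (Suc j - i) (drop i xs) ! p"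
    using assms(1) by (auto simp: in_set_conv_nth)
  have p1: "p < Suc j - i" using p(1) by simp
  have p2: "i + p \<le> j" using p1 by linarith
  have "z = xs ! (i + p)" using p p1 assms(2) by simp
  then show ?thesis using p2 by (intro exI[of _ "i + p"]) simp
qed

lemma walk_shortcut:
  assumes "walk_betw S E u xs v" "i < j" "j < length xs" "xs!i = xs!j"
  shows "walk_betw S E u (take i xs @ drop j xs) v"
proof -
  have w: "walk_in S E xs" using assms by (simp add: walk_betw_def)
  have ne: "xs \<noteq> []" using assms by auto
  have u: "xs!0 = u" using assms(1) ne by (simp add: walk_betw_def hd_conv_nth)
  have v: "xs!(length xs - 1) = v" using assms(1) ne by (simp add: walk_betw_def last_conv_nth)
  have a: "walk_betw S E u (take (Suc i) xs) (xs!j)"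
    using walk_in_take_drop[OF w, of 0 i] assms(2,3,4) u by simp
  have b: "walk_betw S E (xs!j) (drop j xs) v"
    using walk_in_take_drop[OF w, of j "length xs - 1"] assms(2,3) v by simp
  have dj: "drop j xs = xs!j # drop (Suc j) xs" using assms(3) by (rule Cons_nth_drop_Suc[symmetric])
  have ti: "take (Suc i) xs = take i xs @ [xs!i]" using assms(2,3) by (simp add: take_Suc_conv_app_nth)
  have eq: "take (Suc i) xs @ tl (drop j xs) = take i xs @ drop j xs"
    unfolding ti by (simp add: assms(4) dj)
  show ?thesis using walk_append[OF a b] unfolding eq .
qed

lemma walk_distinct:
  assumes "walk_betw S E u xs v"
  shows "\<exists>ys. walk_betw S E u ys v \<and> distinct ys \<and> set ys \<subseteq> set xs \<and> length ys \<le> length xs"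
  using assms
proof (induction "length xs" arbitrary: xs rule: less_induct)
  case less
  show ?case
  proof (cases "distinct xs")
    case True then show ?thesis using less.prems by (intro exI[of _ xs]) simp
  next
    case False
    then obtain i0 j0 where ij0: "i0 < length xs" "j0 < length xs" "i0 \<noteq> j0" "xs!i0 = xs!j0"
      unfolding distinct_conv_nth by blast
    obtain i j where ij: "i < j" "j < length xs" "xs!i = xs!j"
    proof (cases "i0 < j0")
      case True then show ?thesis using ij0 that[of i0 j0] by simp
    next
      case False then have "j0 < i0" using ij0(3) by simp
      then show ?thesis using ij0 that[of j0 i0] by simp
    qed
    let ?zs = "take i xs @ drop j xs"
    have w: "walk_betw S E u ?zs v" using walk_shortcut[OF less.prems ij] .
    have l: "length ?zs < length xs" using ij by simp
    have s: "set ?zs \<subseteq> set xs" using set_take_subset[of i xs] set_drop_subset[of j xs] by auto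
    from less.hyps[OF l w] obtain ys where ys: "walk_betw S E u ys v" "distinct ys" "set ys \<subseteq> set ?zs" "length ys \<le> length ?zs" by blast
    have "set ys \<subseteq> set xs" using ys(3) s by (rule subset_trans)
    moreover have "length ys \<le> length xs" using ys(4) l by linarith
    ultimately show ?thesis using ys(1,2) by blast
  qed
qed

lemma walk_betw_edges_mono:
  "walk_betw S E u xs v \<Longrightarrow> (\<And>i. Suc i < length xs \<Longrightarrow> {xs!i, xs!Suc i} \<in> E') \<Longrightarrow> walk_betw S E' u xs v"
  by (auto simp: walk_betw_def walk_in_def)

locale bg =
  fixes V :: "'a set" and E :: "'a set set"
  assumes conn: "connected_graph V E" and blk: "block_graph V E"
begin

abbreviation d where "d \<equiv> Defs.dist V E"
abbreviation sp where "sp \<equiv> shortest_path V E"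

lemma finV: "finite V" using conn by (simp add: connected_graph_def graph_def)
lemma Vne: "V \<noteq> {}" using conn by (simp add: connected_graph_def)

lemma edge_props: assumes "{u,v} \<in> E" shows "u \<noteq> v" "u \<in> V" "v \<in> V"
proof -
  obtain a b where ab: "{u,v} = {a,b}" "a \<noteq> b" "a \<in> V" "b \<in> V"
    using conn assms unfolding connected_graph_def graph_def by blast
  have "u \<in> {u,v}" "v \<in> {u,v}" by simp_all
  then have "u \<in> {a,b}" "v \<in> {a,b}" unfolding ab(1) .
  then show "u \<in> V" "v \<in> V" using ab by auto
  show "u \<noteq> v"
  proof
    assume "u = v"
    then have "{a,b} = {u}" using ab(1) by simp
    then show False using ab(2) by (simp add: doubleton_eq_iff)
  qed
qed

lemma walk_ex: "u \<in> V \<Longrightarrow> v \<in> V \<Longrightarrow> \<exists>xs. walk_betw V E u xs v"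
  using conn by (simp add: connected_graph_def connected_on_def)

lemma walk_ne: "walk_betw S E u xs v \<Longrightarrow> xs \<noteq> []"
  by (simp add: walk_betw_def walk_in_def)

lemma walk_endpoints: "walk_betw S E u xs v \<Longrightarrow> u \<in> S \<and> v \<in> S"
proof -
  assume w: "walk_betw S E u xs v"
  have "hd xs \<in> set xs" "last xs \<in> set xs" using walk_ne[OF w] by simp_all
  then show ?thesis using w unfolding walk_betw_def walk_in_def by auto
qed

lemma dist_le: assumes "walk_betw V E u xs v" shows "Suc (d u v) \<le> length xs"
proof -
  have "length xs = Suc (length xs - 1)" using walk_ne[OF assms] by (cases xs) auto
  then have "d u v \<le> length xs - 1"
    unfolding dist_def using assms by (intro Least_le) blast
  then show ?thesis using walk_ne[OF assms] by (cases xs) auto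
qed

lemma sp_ex: assumes "u \<in> V" "v \<in> V" shows "\<exists>xs. sp u xs v"
proof -
  obtain xs where xs: "walk_betw V E u xs v" using walk_ex assms by blast
  have "length xs = Suc (length xs - 1)" using walk_ne[OF xs] by (cases xs) auto
  then have "\<exists>n xs. walk_betw V E u xs v \<and> length xs = Suc n" using xs by blast
  then have "\<exists>xs. walk_betw V E u xs v \<and> length xs = Suc (d u v)"
    unfolding dist_def by (rule LeastI_ex)
  then show ?thesis by (simp add: shortest_path_def)
qed

lemma sp_walk: "sp u xs v \<Longrightarrow> walk_betw V E u xs v" by (simp add: shortest_path_def)
lemma sp_len: "sp u xs v \<Longrightarrow> length xs = Suc (d u v)" by (simp add: shortest_path_def)
lemma sp_set: "sp u xs v \<Longrightarrow> set xs \<subseteq> V" by (simp add: shortest_path_def walk_betw_def walk_in_def)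
lemma sp_hd: "sp u xs v \<Longrightarrow> xs ! 0 = u"
proof -
  assume "sp u xs v"
  then have "xs \<noteq> []" "hd xs = u" by (simp_all add: shortest_path_def walk_betw_def walk_in_def)
  then show ?thesis by (simp add: hd_conv_nth)
qed
lemma sp_last: "sp u xs v \<Longrightarrow> xs ! d u v = v"
proof -
  assume "sp u xs v"
  then have "xs \<noteq> []" "last xs = v" "length xs = Suc (d u v)"
    by (simp_all add: shortest_path_def walk_betw_def walk_in_def)
  then show ?thesis by (simp add: last_conv_nth)
qed

lemma dist_refl: "u \<in> V \<Longrightarrow> d u u = 0"
  using dist_le[OF walk_betw_single[of u V E]] by simp

lemma dist_sym: assumes "u \<in> V" "v \<in> V" shows "d u v = d v u"
proof -
  have "d v u \<le> d u v" if uv: "u \<in> V" "v \<in> V" for u v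
  proof -
    obtain xs where "sp u xs v" using sp_ex uv by blast
    then have "walk_betw V E v (rev xs) u" "length (rev xs) = Suc (d u v)"
      using walk_rev[OF sp_walk] sp_len by auto
    then show ?thesis using dist_le by fastforce
  qed
  then show ?thesis using assms by (meson antisym)
qed

lemma dist_tri: assumes "u \<in> V" "v \<in> V" "w \<in> V" shows "d u v \<le> d u w + d w v"
proof -
  obtain xs ys where xs: "sp u xs w" and ys: "sp w ys v" using sp_ex assms by blast
  have "walk_betw V E u (xs @ tl ys) v" using walk_append[OF sp_walk[OF xs] sp_walk[OF ys]] .
  moreover have "length (xs @ tl ys) = Suc (d u w + d w v)"
    using sp_len[OF xs] sp_len[OF ys] by simp
  ultimately show ?thesis using dist_le by fastforce
qed

lemma dist_0: assumes "u \<in> V" "v \<in> V" "d u v = 0" shows "u = v"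
proof -
  obtain xs where xs: "sp u xs v" using sp_ex assms by blast
  then show ?thesis using sp_hd[OF xs] sp_last[OF xs] assms(3) by simp
qed

lemma dist_edge: assumes "{u,v} \<in> E" shows "d u v = 1"
proof -
  have V: "u \<in> V" "v \<in> V" "u \<noteq> v" using edge_props assms by auto
  have "walk_betw V E u [u,v] v" using V assms by (simp add: walk_betw_def walk_in_def nth_Cons split: nat.splits)
  then have "d u v \<le> 1" using dist_le by fastforce
  moreover have "d u v \<noteq> 0" using dist_0 V by blast
  ultimately show ?thesis by simp
qed

lemma dist_1: assumes "u \<in> V" "v \<in> V" "d u v = 1" shows "{u,v} \<in> E"
proof -
  obtain xs where xs: "sp u xs v" using sp_ex assms by blast
  have "length xs = 2" using sp_len[OF xs] assms by simp
  moreover have "walk_in V E xs" using sp_walk[OF xs] by (simp add: walk_betw_def)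
  ultimately have "{xs!0, xs!Suc 0} \<in> E" unfolding walk_in_def by simp
  moreover have "xs ! 1 = v" using sp_last[OF xs] assms(3) by simp
  ultimately show ?thesis using sp_hd[OF xs] by simp
qed

lemma dist_step: assumes "{u,v} \<in> E" "x \<in> V" shows "d x u \<le> d x v + 1" "d x v \<le> d x u + 1"
  using dist_tri[of x u v] dist_tri[of x v u] dist_edge[OF assms(1)] edge_props[OF assms(1)] assms(2)
    dist_sym[of u v] by auto

lemma sp_sub:
  assumes "sp u xs v" "i \<le> j" "j < length xs"
  shows "sp (xs!i) (take (Suc j - i) (drop i xs)) (xs!j)" "d (xs!i) (xs!j) = j - i"
proof -
  let ?ys = "take (Suc j - i) (drop i xs)"
  have w: "walk_in V E xs" using assms sp_walk by (simp add: walk_betw_def)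
  have wy: "walk_betw V E (xs!i) ?ys (xs!j)" using walk_in_take_drop[OF w assms(2,3)] .
  have ly: "length ?ys = Suc (j - i)" using assms by simp
  have n: "length xs = Suc (d u v)" using sp_len[OF assms(1)] .
  have XV: "xs!i \<in> V" "xs!j \<in> V" "u \<in> V" "v \<in> V"
    using sp_set[OF assms(1)] assms n walk_endpoints[OF sp_walk[OF assms(1)]] by auto
  have w1: "walk_betw V E u (take (Suc i) xs) (xs!i)"
    using walk_in_take_drop[OF w, of 0 i] assms sp_hd[OF assms(1)] by simp
  have w2: "walk_betw V E (xs!j) (drop j xs) v"
    using walk_in_take_drop[OF w, of j "d u v"] assms sp_last[OF assms(1)] n by simp
  have "d u (xs!i) \<le> i" using dist_le[OF w1] assms by simp
  moreover have "d (xs!j) v \<le> d u v - j" using dist_le[OF w2] n by simp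
  moreover have "d (xs!i) (xs!j) \<le> j - i" using dist_le[OF wy] unfolding ly by simp
  moreover have "d u v \<le> d u (xs!i) + d (xs!i) (xs!j) + d (xs!j) v"
    using dist_tri[of u v "xs!i"] dist_tri[of "xs!i" v "xs!j"] XV by simp
  ultimately show dd: "d (xs!i) (xs!j) = j - i" using assms n by linarith
  show "sp (xs!i) ?ys (xs!j)" using wy ly dd by (simp add: shortest_path_def)
qed

lemma sp_nth: "sp u xs v \<Longrightarrow> i \<le> j \<Longrightarrow> j < length xs \<Longrightarrow> d (xs!i) (xs!j) = j - i"
  using sp_sub by blast

lemma sp_nth0: "sp u xs v \<Longrightarrow> i < length xs \<Longrightarrow> d u (xs!i) = i"
  using sp_nth[of u xs v 0 i] sp_hd by simp

lemma sp_distinct: assumes "sp u xs v" shows "distinct xs"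
proof -
  have "xs!i \<noteq> xs!j" if "i < j" "j < length xs" for i j
  proof
    assume "xs!i = xs!j"
    moreover have "xs!j \<in> V" using sp_set[OF assms] that(2) nth_mem by blast
    ultimately have "d (xs!i) (xs!j) = 0" using dist_refl by simp
    then show False using sp_nth[OF assms, of i j] that by simp
  qed
  then show ?thesis unfolding distinct_conv_nth by (metis linorder_neqE_nat)
qed

lemma sp_join:
  assumes "sp u xs w" "sp w ys v" "d u w + d w v = d u v"
  shows "sp u (xs @ tl ys) v"
  using walk_append[OF sp_walk[OF assms(1)] sp_walk[OF assms(2)]] sp_len[OF assms(1)] sp_len[OF assms(2)] assms(3)
  by (simp add: shortest_path_def)

lemma sp_rev: assumes "sp u xs v" shows "sp v (rev xs) u"
proof -
  have "u \<in> V" "v \<in> V" using walk_endpoints[OF sp_walk[OF assms]] by auto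
  then show ?thesis using walk_rev[OF sp_walk[OF assms]] sp_len[OF assms] dist_sym
    by (simp add: shortest_path_def)
qed

end

lemma connected_hub:
  assumes "\<And>x. x \<in> T \<Longrightarrow> \<exists>xs. walk_betw T E x xs h"
  shows "connected_on T E"
  unfolding connected_on_def
proof (intro ballI)
  fix u v assume uv: "u \<in> T" "v \<in> T"
  obtain xs ys where a: "walk_betw T E u xs h" and b: "walk_betw T E v ys h" using assms uv by blast
  show "\<exists>xs. walk_betw T E u xs v" using walk_append[OF a walk_rev[OF b]] by blast
qed

lemma distinct_nth_notin_take:
  assumes "distinct ys" "i < j" "j < length ys" shows "ys!j \<notin> set (take (Suc i) ys)"
proof
  assume "ys!j \<in> set (take (Suc i) ys)"
  then obtain k where k: "k < length (take (Suc i) ys)" "take (Suc i) ys ! k = ys ! j"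
    by (auto simp: in_set_conv_nth)
  then have "k \<le> i" "ys!k = ys!j" by auto
  then show False using assms nth_eq_iff_index_eq[of ys k j] by simp
qed

lemma distinct_nth_notin_drop:
  assumes "distinct ys" "j < i" "i < length ys" shows "ys!j \<notin> set (drop i ys)"
proof
  assume "ys!j \<in> set (drop i ys)"
  then obtain k where k: "k < length (drop i ys)" "drop i ys ! k = ys ! j"
    by (auto simp: in_set_conv_nth)
  then have "i + k < length ys" "ys!(i+k) = ys!j" using assms by auto
  then show False using assms nth_eq_iff_index_eq[of ys "i+k" j] by simp
qed

lemma walk_ends_in: assumes "walk_betw S E u xs v" shows "u \<in> set xs" "v \<in> set xs"
proof -
  have "xs \<noteq> []" "hd xs = u" "last xs = v" using assms by (auto simp: walk_betw_def walk_in_def)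
  then show "u \<in> set xs" "v \<in> set xs" by auto
qed

lemma walk_betw_subS: "walk_betw S E u xs v \<Longrightarrow> S \<subseteq> S' \<Longrightarrow> walk_betw S' E u xs v"
  by (auto simp: walk_betw_def walk_in_def)

lemma walk_betw_mono: "walk_betw S E u xs v \<Longrightarrow> set xs \<subseteq> S' \<Longrightarrow> walk_betw S' E u xs v"
  by (simp add: walk_betw_def walk_in_def)

lemma walk_betw_set: "walk_betw S E u xs v \<Longrightarrow> set xs \<subseteq> S"
  by (simp add: walk_betw_def walk_in_def)

lemma walk_edge: "{u,v} \<in> E \<Longrightarrow> u \<in> S \<Longrightarrow> v \<in> S \<Longrightarrow> walk_betw S E u [u,v] v"
  by (simp add: walk_betw_def walk_in_def nth_Cons split: nat.splits)

lemma cycle_nonsep: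
  assumes w: "walk_betw S0 E a ys c" and dys: "distinct ys" and bn: "b \<notin> set ys"
    and ab: "{b,a} \<in> E" and cb: "{c,b} \<in> E" and ac: "a \<noteq> c"
  shows "nonseparable (insert b (set ys)) E"
proof -
  let ?S = "insert b (set ys)"
  have ne: "ys \<noteq> []" using w by (simp add: walk_betw_def walk_in_def)
  have wi: "walk_in S0 E ys" using w by (simp add: walk_betw_def)
  have y0: "ys!0 = a" using w ne by (simp add: walk_betw_def hd_conv_nth)
  have yl: "ys!(length ys - 1) = c" using w ne by (simp add: walk_betw_def last_conv_nth)
  have len: "length ys \<ge> 2"
  proof (rule ccontr)
    assume "\<not> length ys \<ge> 2"
    moreover have "length ys \<noteq> 0" using ne by simp
    ultimately have "length ys = 1" by linarith
    then show False using y0 yl ac by simp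
  qed
  have bwd: "walk_betw (insert b (set (take (Suc i) ys))) E (ys!i) (rev (take (Suc i) ys) @ [b]) b"
    if i: "i < length ys" for i
  proof -
    have w1: "walk_betw S0 E a (take (Suc i) ys) (ys!i)"
      using walk_in_take_drop[OF wi, of 0 i] i y0 by simp
    have w1': "walk_betw (insert b (set (take (Suc i) ys))) E (ys!i) (rev (take (Suc i) ys)) a"
      using walk_betw_mono[OF walk_rev[OF w1]] by auto
    have "a \<in> set (take (Suc i) ys)" using walk_ends_in(1)[OF w1] .
    then have w2: "walk_betw (insert b (set (take (Suc i) ys))) E a [a,b] b"
      using walk_edge[of a b] ab by (simp add: insert_commute)
    show ?thesis using walk_append[OF w1' w2] by simp
  qed
  have fwd: "walk_betw (insert b (set (drop i ys))) E (ys!i) (drop i ys @ [b]) b"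
    if i: "i < length ys" for i
  proof -
    have w1: "walk_betw S0 E (ys!i) (drop i ys) c"
      using walk_in_take_drop[OF wi, of i "length ys - 1"] i yl by simp
    have w1': "walk_betw (insert b (set (drop i ys))) E (ys!i) (drop i ys) c"
      using walk_betw_mono[OF w1] by auto
    have "c \<in> set (drop i ys)" using walk_ends_in(2)[OF w1] .
    then have w2: "walk_betw (insert b (set (drop i ys))) E c [c,b] b"
      using walk_edge[of c b] cb by simp
    show ?thesis using walk_append[OF w1' w2] by simp
  qed
  have c1: "connected_on ?S E"
  proof (rule connected_hub[where h = b])
    fix x assume "x \<in> ?S"
    then show "\<exists>xs. walk_betw ?S E x xs b"
    proof
      assume "x = b" then show ?thesis using walk_betw_single[of b ?S E] by auto
    next
      assume "x \<in> set ys"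
      then obtain i where i: "i < length ys" "x = ys!i" by (auto simp: in_set_conv_nth)
      have "set (take (Suc i) ys) \<subseteq> set ys" by (rule set_take_subset)
      then have "insert b (set (take (Suc i) ys)) \<subseteq> ?S" by auto
      from walk_betw_subS[OF bwd[OF i(1)] this] show ?thesis unfolding i(2) by (rule exI)
    qed
  qed
  have c2: "connected_on (?S - {x}) E" if x: "x \<in> ?S" for x
  proof (cases "x = b")
    case True
    then have S: "?S - {x} = set ys" using bn by auto
    show ?thesis unfolding S
    proof (rule connected_hub[where h = a])
      fix z assume "z \<in> set ys"
      then obtain i where i: "i < length ys" "z = ys!i" by (auto simp: in_set_conv_nth)
      have w1: "walk_betw S0 E a (take (Suc i) ys) (ys!i)"
        using walk_in_take_drop[OF wi, of 0 i] i y0 by simp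
      have "set (rev (take (Suc i) ys)) \<subseteq> set ys" using set_take_subset[of "Suc i" ys] by simp
      from walk_betw_mono[OF walk_rev[OF w1] this] show "\<exists>xs. walk_betw (set ys) E z xs a"
        unfolding i(2) by (rule exI)
    qed
  next
    case False
    then obtain j where j: "j < length ys" "x = ys!j" using x by (auto simp: in_set_conv_nth)
    show ?thesis
    proof (rule connected_hub[where h = b])
      fix z assume z: "z \<in> ?S - {x}"
      show "\<exists>xs. walk_betw (?S - {x}) E z xs b"
      proof (cases "z = b")
        case True then show ?thesis using walk_betw_single[of b "?S - {x}" E] False by auto
      next
        case zb: False
        then obtain i where i: "i < length ys" "z = ys!i" using z by (auto simp: in_set_conv_nth)
        have ij: "i \<noteq> j" using i j z by auto
        show ?thesis
        proof (cases "i < j")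
          case True
          have "x \<notin> set (take (Suc i) ys)" using distinct_nth_notin_take[OF dys True j(1)] j by simp
          moreover have "set (take (Suc i) ys) \<subseteq> set ys" by (rule set_take_subset)
          ultimately have "insert b (set (take (Suc i) ys)) \<subseteq> ?S - {x}" using False by auto
          from walk_betw_subS[OF bwd[OF i(1)] this] show ?thesis unfolding i(2) by (rule exI)
        next
          case False
          then have ji: "j < i" using ij by simp
          have "x \<notin> set (drop i ys)" using distinct_nth_notin_drop[OF dys ji i(1)] j by simp
          moreover have "set (drop i ys) \<subseteq> set ys" by (rule set_drop_subset)
          ultimately have "insert b (set (drop i ys)) \<subseteq> ?S - {x}" using \<open>x \<noteq> b\<close> by auto
          from walk_betw_subS[OF fwd[OF i(1)] this] show ?thesis unfolding i(2) by (rule exI)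
        qed
      qed
    qed
  qed
  show ?thesis unfolding nonseparable_def using c1 c2 by blast
qed

context bg begin

lemma block_ex:
  assumes "nonseparable S E" "S \<subseteq> V"
  shows "\<exists>B. is_block V E B \<and> S \<subseteq> B"
proof -
  let ?A = "{B. S \<subseteq> B \<and> B \<subseteq> V \<and> nonseparable B E}"
  have "?A \<subseteq> Pow V" by auto
  then have fin: "finite ?A" using finV by (meson finite_Pow_iff finite_subset)
  have "S \<in> ?A" using assms by simp
  from finite_has_maximal2[OF fin this] obtain B where B: "B \<in> ?A" "S \<subseteq> B"
    "\<forall>B'\<in>?A. B \<subseteq> B' \<longrightarrow> B = B'" by blast
  have "is_block V E B"
    unfolding is_block_def
  proof (intro conjI allI impI)
    show "B \<subseteq> V" "nonseparable B E" using B by auto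
    fix B' assume h: "B \<subset> B' \<and> B' \<subseteq> V"
    show "\<not> nonseparable B' E"
    proof
      assume "nonseparable B' E"
      then have "B' \<in> ?A" using h B(2) by auto
      then have "B = B'" using B(3) h by blast
      then show False using h by blast
    qed
  qed
  then show ?thesis using B by blast
qed

lemma R:
  assumes ab: "{a,b} \<in> E" and bc: "{b,c} \<in> E" and ac: "a \<noteq> c"
    and w: "walk_betw (V - {b}) E a xs c"
  shows "{a,c} \<in> E"
proof -
  obtain ys where ys: "walk_betw (V - {b}) E a ys c" "distinct ys" using walk_distinct[OF w] by blast
  have bn: "b \<notin> set ys" using walk_betw_set[OF ys(1)] by auto
  have ns: "nonseparable (insert b (set ys)) E"
    using cycle_nonsep[OF ys(1) ys(2) bn _ _ ac] ab bc by (simp add: insert_commute)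
  have sub: "insert b (set ys) \<subseteq> V" using walk_betw_set[OF ys(1)] edge_props(2)[OF ab] edge_props(1)[OF ab]
    edge_props(3)[OF ab] by auto
  obtain B where B: "is_block V E B" "insert b (set ys) \<subseteq> B" using block_ex[OF ns sub] by blast
  have cl: "is_clique E B" using blk B(1) by (simp add: block_graph_def)
  have "a \<in> set ys" "c \<in> set ys" using walk_ends_in[OF ys(1)] by auto
  then show ?thesis using cl B(2) ac unfolding is_clique_def by blast
qed

end

lemma seq_bound:
  fixes f :: "nat \<Rightarrow> nat"
  assumes step: "\<And>j. j < k \<Longrightarrow> f (Suc j) \<le> f j + 1 \<and> f j \<le> f (Suc j) + 1"
    and inter: "\<And>j. 0 < j \<Longrightarrow> j < k \<Longrightarrow> f j < max (f (j - 1)) (f (Suc j))"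
    and ak: "a \<le> k"
  shows "f a \<le> max (f 0 - a) (f k - (k - a))"
proof -
  have L1: "f (Suc (Suc i)) = f (Suc i) + 1" if "f i \<le> f (Suc i)" "Suc i < k" for i
  proof -
    have "f (Suc i) < max (f i) (f (Suc (Suc i)))" using inter[of "Suc i"] that by simp
    then have "f (Suc i) < f (Suc (Suc i))" using that(1) by linarith
    then show ?thesis using step[of "Suc i"] that by simp
  qed
  have L2: "f (Suc m) = f m + 1" if "f i \<le> f (Suc i)" "i < m" "m < k" for i m
    using that
  proof (induction m)
    case 0 then show ?case by simp
  next
    case (Suc m)
    show ?case
    proof (cases "i = m")
      case True then show ?thesis using L1 Suc.prems by simp
    next
      case False
      then have "f (Suc m) = f m + 1" using Suc by simp
      then show ?thesis using L1[of m] Suc.prems by simp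
    qed
  qed
  show ?thesis
  proof (cases "\<exists>i<a. f i \<le> f (Suc i)")
    case True
    then obtain i where i: "i < a" "f i \<le> f (Suc i)" by blast
    have "f (a + n) = f a + n" if "a + n \<le> k" for n
      using that
    proof (induction n)
      case 0 then show ?case by simp
    next
      case (Suc n)
      then have "f (Suc (a + n)) = f (a + n) + 1" using L2[OF i(2), of "a + n"] i(1) by simp
      then show ?case using Suc by simp
    qed
    from this[of "k - a"] have "f k = f a + (k - a)" using ak by simp
    then show ?thesis by simp
  next
    case False
    have "f 0 = f b + b" if "b \<le> a" for b
      using that
    proof (induction b)
      case 0 then show ?case by simp
    next
      case (Suc b)
      then have "f (Suc b) < f b" using False by (meson Suc_le_lessD not_le)
      moreover have "f b \<le> f (Suc b) + 1" using step[of b] Suc.prems ak by simp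
      ultimately show ?case using Suc by simp
    qed
    from this[of a] show ?thesis by simp
  qed
qed

context bg begin

lemma sp_unique:
  assumes xs: "sp u xs v" and ys: "sp u ys v"
  shows "xs = ys"
proof (rule ccontr)
  assume ne: "xs \<noteq> ys"
  let ?k = "d u v"
  have lx: "length xs = Suc ?k" and ly: "length ys = Suc ?k" using sp_len xs ys by auto
  have "\<exists>j. j < Suc ?k \<and> xs!j \<noteq> ys!j"
  proof (rule ccontr)
    assume "\<not> ?thesis"
    then have "xs = ys" using lx ly by (intro nth_equalityI) auto
    then show False using ne by simp
  qed
  then obtain j where j: "j < Suc ?k" "xs!j \<noteq> ys!j" and jmin: "\<And>i. i < j \<Longrightarrow> xs!i = ys!i"
    using exists_least_iff[of "\<lambda>j. j < Suc ?k \<and> xs!j \<noteq> ys!j"] by (metis less_trans)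
  have "j \<noteq> 0"
  proof
    assume "j = 0" then show False using j(2) sp_hd[OF xs] sp_hd[OF ys] by simp
  qed
  moreover have "j \<noteq> ?k"
  proof
    assume "j = ?k" then show False using j(2) sp_last[OF xs] sp_last[OF ys] by simp
  qed
  ultimately have j1: "0 < j" "j < ?k" using j by auto
  define a where "a = xs!(j-1)"
  define b where "b = xs!j"
  define c where "c = xs!(Suc j)"
  have wx: "walk_in V E xs" and wy: "walk_in V E ys" using sp_walk xs ys by (auto simp: walk_betw_def)
  have ab: "{a,b} \<in> E" using wx j1 lx unfolding walk_in_def a_def b_def
    by (metis Suc_pred' less_SucI)
  have bc: "{b,c} \<in> E" using wx j1 lx unfolding walk_in_def b_def c_def by simp
  have dac: "d a c = 2" using sp_nth[OF xs, of "j-1" "Suc j"] j1 lx unfolding a_def c_def by simp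
  have ac: "a \<noteq> c"
  proof
    assume "a = c"
    moreover have "c \<in> V" using sp_set[OF xs] j1 lx unfolding c_def by (simp add: subset_iff)
    ultimately show False using dac dist_refl by simp
  qed
  have ay: "a = ys!(j-1)" using jmin[of "j-1"] j1 unfolding a_def by simp
  have w1: "walk_betw V E a (drop (j-1) ys) v"
    using walk_in_take_drop[OF wy, of "j-1" ?k] ly j1 sp_last[OF ys] ay by simp
  have w2: "walk_betw V E c (drop (Suc j) xs) v"
    using walk_in_take_drop[OF wx, of "Suc j" ?k] lx j1 sp_last[OF xs] unfolding c_def by simp
  have w: "walk_betw V E a (drop (j-1) ys @ tl (rev (drop (Suc j) xs))) c"
    using walk_append[OF w1 walk_rev[OF w2]] .
  have nb1: "b \<notin> set (drop (j-1) ys)"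
  proof
    assume "b \<in> set (drop (j-1) ys)"
    then obtain m where m: "m < length (drop (j-1) ys)" "drop (j-1) ys ! m = b" by (auto simp: in_set_conv_nth)
    let ?m = "j - 1 + m"
    have m2: "?m < length ys" "ys!?m = b" using m j1 by auto
    have "d u (ys!?m) = ?m" using sp_nth0[OF ys m2(1)] .
    moreover have "d u b = j" using sp_nth0[OF xs] j lx unfolding b_def by simp
    ultimately have "?m = j" using m2 by simp
    then show False using m2 j unfolding b_def by simp
  qed
  have nb2: "b \<notin> set (tl (rev (drop (Suc j) xs)))"
  proof
    assume "b \<in> set (tl (rev (drop (Suc j) xs)))"
    then have "b \<in> set (drop (Suc j) xs)" by (metis list.sel(2) list.set_sel(2) set_rev)
    then show False using distinct_nth_notin_drop[OF sp_distinct[OF xs], of j "Suc j"] j1 lx unfolding b_def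
      by simp
  qed
  have "set (drop (j-1) ys @ tl (rev (drop (Suc j) xs))) \<subseteq> V - {b}"
    using walk_betw_set[OF w] nb1 nb2 by auto
  then have "walk_betw (V - {b}) E a (drop (j-1) ys @ tl (rev (drop (Suc j) xs))) c"
    by (rule walk_betw_mono[OF w])
  then have "{a,c} \<in> E" using R[OF ab bc ac] by blast
  then show False using dist_edge dac by simp
qed

lemma sp_between:
  assumes xs: "sp u xs v" and w: "w \<in> V" and eq: "d u w + d w v = d u v"
  shows "xs ! d u w = w"
proof -
  have uv: "u \<in> V" "v \<in> V" using walk_endpoints[OF sp_walk[OF xs]] by auto
  obtain g1 g2 where g1: "sp u g1 w" and g2: "sp w g2 v" using sp_ex uv w by metis
  have "sp u (g1 @ tl g2) v" using sp_join[OF g1 g2 eq] .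
  then have "xs = g1 @ tl g2" using sp_unique[OF xs] by blast
  moreover have "d u w < length g1" using sp_len[OF g1] by simp
  ultimately show ?thesis using sp_last[OF g1] by (simp add: nth_append)
qed

lemma V2:
  assumes ab: "{a,b} \<in> E" and bc: "{b,c} \<in> E" and dac: "d a c = 2" and x: "x \<in> V"
  shows "d x b < max (d x a) (d x c)"
proof -
  have V: "a \<in> V" "b \<in> V" "c \<in> V" using edge_props ab bc by auto
  obtain g0 g2 where g0: "sp a g0 x" and g2: "sp x g2 c" using sp_ex V x by metis
  have w: "walk_betw V E a (g0 @ tl g2) c" using walk_append[OF sp_walk[OF g0] sp_walk[OF g2]] .
  show ?thesis
  proof (cases "b \<in> set g0")
    case True
    then obtain m where m: "m < length g0" "g0!m = b" by (auto simp: in_set_conv_nth)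
    have "d a b = m" using sp_nth0[OF g0 m(1)] m(2) by simp
    then have m1: "m = 1" using dist_edge[OF ab] by simp
    have "d b x = d a x - 1" using sp_nth[OF g0, of m "d a x"] m m1 sp_last[OF g0] sp_len[OF g0] by simp
    moreover have "d a x \<ge> 1" using m(1) m1 sp_len[OF g0] by simp
    ultimately have "d x b < d x a" using dist_sym V x by simp
    then show ?thesis by simp
  next
    case False
    show ?thesis
    proof (cases "b \<in> set g2")
      case True
      then obtain m where m: "m < length g2" "g2!m = b" by (auto simp: in_set_conv_nth)
      have "d b c = d x c - m" using sp_nth[OF g2, of m "d x c"] m sp_last[OF g2] sp_len[OF g2] by simp
      then have "d x c = m + 1" using dist_edge[OF bc] m(1) sp_len[OF g2] by simp
      moreover have "d x b = m" using sp_nth0[OF g2 m(1)] m(2) by simp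
      ultimately show ?thesis by simp
    next
      case False
      have "set (tl g2) \<subseteq> set g2" by (cases g2) auto
      then have "b \<notin> set (g0 @ tl g2)" using False \<open>b \<notin> set g0\<close> by auto
      moreover have "set (g0 @ tl g2) \<subseteq> V" using walk_betw_set[OF w] .
      ultimately have "set (g0 @ tl g2) \<subseteq> V - {b}" by blast
      then have "walk_betw (V - {b}) E a (g0 @ tl g2) c" by (rule walk_betw_mono[OF w])
      moreover have "a \<noteq> c" using dac dist_refl V by auto
      ultimately have "{a,c} \<in> E" using R[OF ab bc] by blast
      then show ?thesis using dist_edge dac by simp
    qed
  qed
qed

lemma sp_profile:
  assumes xs: "sp u xs v" and x: "x \<in> V" and a: "a \<le> d u v"
  shows "d x (xs!a) \<le> max (d x u - a) (d x v - (d u v - a))"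
proof -
  let ?k = "d u v"
  let ?f = "\<lambda>j. d x (xs!j)"
  have lx: "length xs = Suc ?k" using sp_len[OF xs] .
  have XV: "xs!j \<in> V" if "j \<le> ?k" for j using sp_set[OF xs] that lx by (simp add: subset_iff)
  have wx: "walk_in V E xs" using sp_walk[OF xs] by (simp add: walk_betw_def)
  have edge: "{xs!j, xs!Suc j} \<in> E" if "j < ?k" for j using wx that lx by (simp add: walk_in_def)
  have "?f a \<le> max (?f 0 - a) (?f ?k - (?k - a))"
  proof (rule seq_bound[where f = ?f])
    fix j assume "j < ?k"
    then show "?f (Suc j) \<le> ?f j + 1 \<and> ?f j \<le> ?f (Suc j) + 1"
      using dist_step[OF edge x] by simp
  next
    fix j assume j: "0 < j" "j < ?k"
    have e1: "{xs!(j-1), xs!j} \<in> E" using edge[of "j-1"] j by simp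
    have e2: "{xs!j, xs!Suc j} \<in> E" using edge[of j] j by simp
    have "d (xs!(j-1)) (xs!Suc j) = 2" using sp_nth[OF xs, of "j-1" "Suc j"] j lx by simp
    then show "?f j < max (?f (j - 1)) (?f (Suc j))" using V2[OF e1 e2 _ x] by simp
  qed (use a in simp)
  then show ?thesis using sp_hd[OF xs] sp_last[OF xs] by simp
qed

end

context bg begin

abbreviation "D \<equiv> diam V E"
abbreviation "r \<equiv> rad V E"
abbreviation "C \<equiv> center V E"

lemma ecc_ge: "u \<in> V \<Longrightarrow> d u v \<le> ecc V E v"
  unfolding ecc_def using finV by (intro Max_ge) auto

lemma ecc_ex: "\<exists>u\<in>V. d u v = ecc V E v"
proof -
  have "ecc V E v \<in> (\<lambda>u. d u v) ` V" unfolding ecc_def using finV Vne by (intro Max_in) auto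
  then show ?thesis by auto
qed

lemma ecc_le: "(\<And>u. u \<in> V \<Longrightarrow> d u v \<le> m) \<Longrightarrow> ecc V E v \<le> m"
  unfolding ecc_def using finV Vne by (subst Max_le_iff) auto

lemma rad_le: "v \<in> V \<Longrightarrow> r \<le> ecc V E v"
  unfolding rad_def using finV by (intro Min_le) auto

lemma rad_ex: "\<exists>c\<in>V. ecc V E c = r"
proof -
  have "r \<in> ecc V E ` V" unfolding rad_def using finV Vne by (intro Min_in) auto
  then show ?thesis by auto
qed

lemma diam_ge_ecc: "v \<in> V \<Longrightarrow> ecc V E v \<le> D"
  unfolding diam_def using finV by (intro Max_ge) auto

lemma diam_ge: "u \<in> V \<Longrightarrow> v \<in> V \<Longrightarrow> d u v \<le> D"
  using ecc_ge diam_ge_ecc le_trans by blast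

lemma diam_ex: "\<exists>u\<in>V. \<exists>v\<in>V. d u v = D"
proof -
  have "D \<in> ecc V E ` V" unfolding diam_def using finV Vne by (intro Max_in) auto
  then obtain v where v: "v \<in> V" "ecc V E v = D" by auto
  then show ?thesis using ecc_ex[of v] by metis
qed

lemma center_iff: "c \<in> C \<longleftrightarrow> c \<in> V \<and> ecc V E c = r"
  by (simp add: center_def)

lemma center_dist: "c \<in> C \<Longrightarrow> u \<in> V \<Longrightarrow> d u c \<le> r \<and> d c u \<le> r"
  using ecc_ge center_iff dist_sym by (metis)

lemma D_le: "D \<le> 2 * r"
proof -
  obtain u v where uv: "u \<in> V" "v \<in> V" "d u v = D" using diam_ex by blast
  obtain c where c: "c \<in> V" "ecc V E c = r" using rad_ex by blast
  have "d u v \<le> d u c + d c v" using dist_tri uv c by blast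
  moreover have "d u c \<le> r" "d v c \<le> r" using ecc_ge[of u c] ecc_ge[of v c] uv c by auto
  ultimately show ?thesis using uv c dist_sym[of c v] by simp
qed

lemma diam_path: "\<exists>u v g. sp u g v \<and> d u v = D"
proof -
  obtain u v where uv: "u \<in> V" "v \<in> V" "d u v = D" using diam_ex by blast
  then show ?thesis using sp_ex[OF uv(1,2)] by blast
qed

lemma profile_D:
  assumes g: "sp u g v" "d u v = D" and x: "x \<in> V" and a: "a \<le> D"
  shows "d x (g!a) \<le> max (d x u - a) (d x v - (D - a))"
  using sp_profile[OF g(1) x] g(2) a by simp

lemma uv_of_sp: "sp u g v \<Longrightarrow> u \<in> V \<and> v \<in> V"
  using walk_endpoints sp_walk by blast

lemma nth_sp_V: "sp u g v \<Longrightarrow> a \<le> d u v \<Longrightarrow> g!a \<in> V"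
  using sp_set sp_len by (metis le_imp_less_Suc nth_mem subsetD)

lemma ecc_mid:
  assumes g: "sp u g v" "d u v = D" and a: "a \<le> D"
  shows "ecc V E (g!a) \<le> max (D - a) a"
proof (rule ecc_le)
  fix x assume x: "x \<in> V"
  have uv: "u \<in> V" "v \<in> V" using uv_of_sp[OF g(1)] by auto
  have "d x (g!a) \<le> max (d x u - a) (d x v - (D - a))" using profile_D[OF g x a] .
  moreover have "d x u \<le> D" "d x v \<le> D" using diam_ge x uv by auto
  ultimately have "d x (g!a) \<le> max (D - a) a" using a by linarith
  moreover have "g!a \<in> V" using nth_sp_V[OF g(1)] g(2) a by simp
  ultimately show "d x (g!a) \<le> max (D - a) a" by simp
qed

lemma two_r: "2 * r \<le> D + 1"
proof -
  obtain u v g where g: "sp u g v" "d u v = D" using diam_path by blast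
  let ?a = "D div 2"
  have "ecc V E (g!?a) \<le> max (D - ?a) ?a" using ecc_mid[OF g, of ?a] by simp
  moreover have "max (D - ?a) ?a = D - ?a" by simp
  moreover have "r \<le> ecc V E (g!?a)" using rad_le nth_sp_V[OF g(1)] g(2) by simp
  ultimately have "r \<le> D - D div 2" by linarith
  then show ?thesis by linarith
qed

lemma center_prof:
  assumes g: "sp u g v" "d u v = D" and c: "c \<in> C" and a: "a \<le> D"
  shows "d c (g!a) \<le> max (r - a) (r - (D - a))"
proof -
  have uv: "u \<in> V" "v \<in> V" using uv_of_sp[OF g(1)] by auto
  have cV: "c \<in> V" using c center_iff by auto
  have "d c u \<le> r" "d c v \<le> r" using center_dist[OF c] uv by auto
  then show ?thesis using profile_D[OF g cV a] by linarith
qed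

lemma even_center:
  assumes ev: "D = 2 * r"
  shows "\<exists>c. C = {c}"
proof -
  obtain u v g where g: "sp u g v" "d u v = D" using diam_path by blast
  let ?m = "g!r"
  have mV: "?m \<in> V" using nth_sp_V[OF g(1)] g(2) ev by simp
  have "ecc V E ?m \<le> r" using ecc_mid[OF g, of r] ev by simp
  then have mC: "?m \<in> C" using rad_le[OF mV] mV center_iff by simp
  have "c = ?m" if c: "c \<in> C" for c
  proof -
    have "d c ?m = 0" using center_prof[OF g c, of r] ev by simp
    then show ?thesis using dist_0 mV c center_iff by blast
  qed
  then have "C = {?m}" using mC by blast
  then show ?thesis by blast
qed

lemma odd_center:
  assumes od: "D + 1 = 2 * r" and D2: "D \<ge> 2"
  shows "\<exists>c1 c2. c1 \<in> C \<and> c2 \<in> C \<and> {c1,c2} \<in> E \<and> (\<forall>c\<in>C. d c c1 \<le> 1 \<and> d c c2 \<le> 1)"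
proof -
  obtain u v g where g: "sp u g v" "d u v = D" using diam_path by blast
  have r1: "r \<ge> 1" using od by simp
  let ?c1 = "g!(r-1)" and ?c2 = "g!r"
  have V1: "?c1 \<in> V" using nth_sp_V[OF g(1)] g(2) od by simp
  have V2: "?c2 \<in> V" using nth_sp_V[OF g(1)] g(2) od by simp
  have "ecc V E ?c1 \<le> r" using ecc_mid[OF g, of "r-1"] od by simp
  then have C1: "?c1 \<in> C" using rad_le[OF V1] V1 center_iff by simp
  have "ecc V E ?c2 \<le> r" using ecc_mid[OF g, of r] od by simp
  then have C2: "?c2 \<in> C" using rad_le[OF V2] V2 center_iff by simp
  have "d ?c1 ?c2 = 1" using sp_nth[OF g(1), of "r-1" r] sp_len[OF g(1)] g(2) od r1 by simp
  then have E12: "{?c1,?c2} \<in> E" using dist_1 V1 V2 by blast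
  have "d c ?c1 \<le> 1 \<and> d c ?c2 \<le> 1" if c: "c \<in> C" for c
    using center_prof[OF g c, of "r-1"] center_prof[OF g c, of r] od by simp
  then show ?thesis using C1 C2 E12 by blast
qed

lemma d_le1_cases: "x \<in> V \<Longrightarrow> y \<in> V \<Longrightarrow> d x y \<le> 1 \<Longrightarrow> x = y \<or> {x,y} \<in> E"
  using dist_0 dist_1 by (metis le_neq_implies_less less_one)

lemma odd_clique:
  assumes od: "D + 1 = 2 * r" and D2: "D \<ge> 2" and a: "a \<in> C" and b: "b \<in> C" and ab: "a \<noteq> b"
  shows "{a,b} \<in> E"
proof -
  obtain c1 c2 where cc: "c1 \<in> C" "c2 \<in> C" "{c1,c2} \<in> E" "\<forall>c\<in>C. d c c1 \<le> 1 \<and> d c c2 \<le> 1"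
    using odd_center[OF od D2] by blast
  have V: "a \<in> V" "b \<in> V" "c1 \<in> V" "c2 \<in> V" using a b cc center_iff by auto
  have a1: "a = c1 \<or> {a,c1} \<in> E" "a = c2 \<or> {a,c2} \<in> E"
    using d_le1_cases V cc(4) a by auto
  have b1: "b = c1 \<or> {b,c1} \<in> E" "b = c2 \<or> {b,c2} \<in> E"
    using d_le1_cases V cc(4) b by auto
  have c12: "c1 \<noteq> c2" using edge_props(1)[OF cc(3)] .
  show ?thesis
  proof (cases "a = c1 \<or> a = c2 \<or> b = c1 \<or> b = c2")
    case True
    then show ?thesis using a1 b1 cc(3) ab c12 by (auto simp: insert_commute)
  next
    case False
    then have e: "{a,c1} \<in> E" "{c1,b} \<in> E" "{a,c2} \<in> E" "{c2,b} \<in> E"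
      using a1 b1 by (auto simp: insert_commute)
    have "walk_betw (V - {c1}) E a [a,c2,b] b"
      using e(3,4) V False c12 by (simp add: walk_betw_def walk_in_def nth_Cons split: nat.splits)
    then show ?thesis using R[OF e(1,2) ab] by blast
  qed
qed

end

lemma internal_iff: "z \<in> internal xs \<longleftrightarrow> (\<exists>p. 0 < p \<and> Suc p < length xs \<and> xs!p = z)"
proof
  assume "z \<in> internal xs"
  then obtain q where q: "q < length (butlast (tl xs))" "butlast (tl xs) ! q = z"
    unfolding internal_def by (auto simp: in_set_conv_nth)
  then show "\<exists>p. 0 < p \<and> Suc p < length xs \<and> xs!p = z"
    by (intro exI[of _ "Suc q"]) (auto simp: nth_butlast nth_tl)
next
  assume "\<exists>p. 0 < p \<and> Suc p < length xs \<and> xs!p = z"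
  then obtain p where p: "0 < p" "Suc p < length xs" "xs!p = z" by blast
  then have "butlast (tl xs) ! (p - 1) = z" "p - 1 < length (butlast (tl xs))"
    by (auto simp: nth_butlast nth_tl)
  then show "z \<in> internal xs" unfolding internal_def by (metis nth_mem)
qed

context bg begin

lemma sp_refl: "v \<in> V \<Longrightarrow> sp v [v] v"
  using walk_betw_single[of v V E] dist_refl by (simp add: shortest_path_def)

lemma internal_single[simp]: "internal [v] = {}" by (simp add: internal_def)

lemma singleton_kmv: "v \<in> V \<Longrightarrow> k_dist_mutual_visibility_set k V E {v}"
  unfolding k_dist_mutual_visibility_set_def using sp_refl by fastforce

lemma kmv_mv: "k_dist_mutual_visibility_set k V E M \<Longrightarrow> mutual_visibility_set V E M"
  unfolding k_dist_mutual_visibility_set_def mutual_visibility_set_def by blast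

definition "sing = (\<lambda>v. {v}) ` V"

lemma sing_part: "partition_on V sing" "finite sing"
  unfolding sing_def partition_on_def disjoint_def using finV by auto

lemma chi_k_ex: "\<exists>P. partition_on V P \<and> finite P \<and> (\<forall>M\<in>P. k_dist_mutual_visibility_set k V E M)"
  using sing_part singleton_kmv unfolding sing_def by blast

lemma chi_k_le: "partition_on V P \<Longrightarrow> finite P \<Longrightarrow> (\<forall>M\<in>P. k_dist_mutual_visibility_set k V E M)
   \<Longrightarrow> chi_mu_k k V E \<le> card P"
  unfolding chi_mu_k_def by (intro Least_le) blast

lemma chi_le: "partition_on V P \<Longrightarrow> finite P \<Longrightarrow> (\<forall>M\<in>P. mutual_visibility_set V E M)
   \<Longrightarrow> chi_mu V E \<le> card P"
  unfolding chi_mu_def by (intro Least_le) blast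

lemma chi_k_wit: "\<exists>P. partition_on V P \<and> finite P \<and> card P = chi_mu_k k V E \<and>
    (\<forall>M\<in>P. k_dist_mutual_visibility_set k V E M)"
proof -
  have "\<exists>n P. partition_on V P \<and> finite P \<and> card P = n \<and> (\<forall>M\<in>P. k_dist_mutual_visibility_set k V E M)"
    using chi_k_ex by blast
  then show ?thesis unfolding chi_mu_k_def by (rule LeastI_ex)
qed

lemma chi_wit: "\<exists>P. partition_on V P \<and> finite P \<and> card P = chi_mu V E \<and>
    (\<forall>M\<in>P. mutual_visibility_set V E M)"
proof -
  have "\<exists>n P. partition_on V P \<and> finite P \<and> card P = n \<and> (\<forall>M\<in>P. mutual_visibility_set V E M)"
    using chi_k_ex[of 0] kmv_mv by blast
  then show ?thesis unfolding chi_mu_def by (rule LeastI_ex)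
qed

lemma chi_le_chi_k: "chi_mu V E \<le> chi_mu_k k V E"
proof -
  obtain P where P: "partition_on V P" "finite P" "card P = chi_mu_k k V E"
    "\<forall>M\<in>P. k_dist_mutual_visibility_set k V E M" using chi_k_wit by blast
  then show ?thesis using chi_le[OF P(1,2)] kmv_mv by auto
qed

lemma mv_no_three:
  assumes M: "mutual_visibility_set V E M" and g: "sp u g v"
    and ijk: "i < j" "j < k" "k \<le> d u v" and inM: "g!i \<in> M" "g!j \<in> M" "g!k \<in> M"
  shows False
proof -
  have lg: "length g = Suc (d u v)" using sp_len[OF g] .
  obtain xs where xs: "sp (g!i) xs (g!k)" "internal xs \<inter> M = {}"
    using M inM unfolding mutual_visibility_set_def by blast
  have sub: "sp (g!i) (take (Suc k - i) (drop i g)) (g!k)" using sp_sub(1)[OF g, of i k] ijk lg by simp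
  have eq: "xs = take (Suc k - i) (drop i g)" using sp_unique[OF xs(1) sub] .
  have "xs ! (j - i) = g!j" using eq ijk lg by simp
  moreover have "0 < j - i" "Suc (j - i) < length xs" using eq ijk lg by auto
  ultimately have "g!j \<in> internal xs" unfolding internal_iff by blast
  then show False using xs(2) inM by blast
qed

lemma mv_card_path:
  assumes M: "mutual_visibility_set V E M" and g: "sp u g v"
  shows "card (M \<inter> set g) \<le> 2"
proof -
  let ?I = "{i. i \<le> d u v \<and> g!i \<in> M}"
  have lg: "length g = Suc (d u v)" using sp_len[OF g] .
  show ?thesis
  proof (cases "?I = {}")
    case True
    then have "M \<inter> set g = {}" using lg by (auto simp: in_set_conv_nth)
    then show ?thesis by simp
  next
    case False
    have fI: "finite ?I" by simp
    let ?lo = "Min ?I" and ?hi = "Max ?I"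
    have lo: "?lo \<in> ?I" "?hi \<in> ?I" using Min_in Max_in fI False by blast+
    have "M \<inter> set g \<subseteq> {g!?lo, g!?hi}"
    proof
      fix z assume z: "z \<in> M \<inter> set g"
      then obtain j where j: "j < length g" "g!j = z" by (auto simp: in_set_conv_nth)
      then have jI: "j \<in> ?I" using z lg by auto
      have le: "?lo \<le> j" "j \<le> ?hi" using jI fI by auto
      have F: False if "?lo < j" "j < ?hi"
        using mv_no_three[OF M g that] lo jI by auto
      have "j = ?lo \<or> j = ?hi"
      proof (rule ccontr)
        assume "\<not> (j = ?lo \<or> j = ?hi)"
        then have "?lo < j" "j < ?hi" using le by auto
        then show False by (rule F)
      qed
      then show "z \<in> {g!?lo, g!?hi}" using j by auto
    qed
    then have "card (M \<inter> set g) \<le> card {g!?lo, g!?hi}" by (intro card_mono) auto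
    also have "\<dots> \<le> 2" by (simp add: card_insert_le_m1)
    finally show ?thesis .
  qed
qed

lemma chi_lower:
  assumes P: "partition_on V P" "finite P" "\<forall>M\<in>P. mutual_visibility_set V E M"
  shows "D + 1 \<le> 2 * card P"
proof -
  obtain u v g where g: "sp u g v" "d u v = D" using diam_path by blast
  have "card (set g) = D + 1" using distinct_card[OF sp_distinct[OF g(1)]] sp_len[OF g(1)] g(2) by simp
  moreover have "set g = (\<Union>M\<in>P. M \<inter> set g)" using sp_set[OF g(1)] P(1) unfolding partition_on_def by auto
  ultimately have "D + 1 \<le> (\<Sum>M\<in>P. card (M \<inter> set g))" using card_UN_le[OF P(2), of "\<lambda>M. M \<inter> set g"] by simp
  also have "\<dots> \<le> (\<Sum>M\<in>P. 2)" using mv_card_path[OF _ g(1)] P(3) by (intro sum_mono) auto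
  finally show ?thesis by simp
qed

lemma chi_ge_b: "(D + 2) div 2 \<le> chi_mu V E"
proof -
  obtain P where P: "partition_on V P" "finite P" "card P = chi_mu V E"
    "\<forall>M\<in>P. mutual_visibility_set V E M" using chi_wit by blast
  have "D + 1 \<le> 2 * card P" using chi_lower P by blast
  then show ?thesis using P(3) by linarith
qed

end

definition sw :: "nat \<Rightarrow> nat \<Rightarrow> nat \<Rightarrow> nat" where
  "sw s t x = (if x = t then s else if x = s then t else x)"

lemma sw_inj: "sw s t x = sw s t y \<Longrightarrow> x = y"
  unfolding sw_def by (auto split: if_splits)

lemma sw_top[simp]: "sw s t t = s" by (simp add: sw_def)

lemma sw_le: "s \<le> n \<Longrightarrow> t \<le> n \<Longrightarrow> x \<le> n \<Longrightarrow> sw s t x \<le> n"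
  by (simp add: sw_def)

lemma sw_zero: "0 < x \<Longrightarrow> 0 < t \<Longrightarrow> sw s t x = 0 \<Longrightarrow> x = t \<and> s = 0"
  unfolding sw_def by (auto split: if_splits)

lemma internal_rev: "internal (rev xs) = internal xs"
proof -
  have t: "tl (rev xs) = rev (butlast xs)" by (metis butlast_rev rev_rev_ident)
  have "butlast (tl (rev xs)) = rev (butlast (tl xs))"
    unfolding t butlast_rev butlast_tl ..
  then show ?thesis unfolding internal_def by simp
qed

context bg begin

lemma color_partition:
  assumes rng: "\<And>v. v \<in> V \<Longrightarrow> \<kappa> v < n"
  shows "\<exists>P. partition_on V P \<and> finite P \<and> card P \<le> n \<and> (\<forall>M\<in>P. \<exists>i. M = {v\<in>V. \<kappa> v = i})"
proof -
  let ?P = "(\<lambda>i. {v\<in>V. \<kappa> v = i}) ` {..<n} - {{}}"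
  have "partition_on V ?P"
    unfolding partition_on_def disjoint_def
  proof (intro conjI)
    show "\<Union> ?P = V" using rng by auto
    show "\<forall>A\<in>?P. \<forall>B\<in>?P. A \<noteq> B \<longrightarrow> A \<inter> B = {}" by auto
    show "{} \<notin> ?P" by auto
  qed
  moreover have "finite ?P" by simp
  moreover have "card ?P \<le> n"
    by (metis (no_types, lifting) card_Diff1_le card_image_le card_lessThan finite_imageI finite_lessThan le_trans)
  moreover have "\<forall>M\<in>?P. \<exists>i. M = {v\<in>V. \<kappa> v = i}" by auto
  ultimately show ?thesis by blast
qed

lemma color_chi:
  assumes rng: "\<And>v. v \<in> V \<Longrightarrow> \<kappa> v < n"
    and good: "\<And>u w. u \<in> V \<Longrightarrow> w \<in> V \<Longrightarrow> \<kappa> u = \<kappa> w \<Longrightarrow>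
       \<exists>xs. sp u xs w \<and> (\<forall>z\<in>internal xs. \<kappa> z \<noteq> \<kappa> u)"
  shows "chi_mu V E \<le> n"
proof -
  obtain P where P: "partition_on V P" "finite P" "card P \<le> n" "\<forall>M\<in>P. \<exists>i. M = {v\<in>V. \<kappa> v = i}"
    using color_partition[where \<kappa>=\<kappa> and n=n] rng by blast
  have "\<forall>M\<in>P. mutual_visibility_set V E M"
  proof
    fix M assume "M \<in> P"
    then obtain i where M: "M = {v\<in>V. \<kappa> v = i}" using P(4) by blast
    show "mutual_visibility_set V E M" unfolding mutual_visibility_set_def
    proof (intro conjI ballI)
      show "M \<subseteq> V" using M by auto
      fix u w assume "u \<in> M" "w \<in> M"
      then obtain xs where "sp u xs w" "\<forall>z\<in>internal xs. \<kappa> z \<noteq> \<kappa> u" using good M by force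
      then show "\<exists>xs. shortest_path V E u xs w \<and> internal xs \<inter> M = {}" using M \<open>u \<in> M\<close> by auto
    qed
  qed
  then show ?thesis using chi_le[OF P(1,2)] P(3) by simp
qed

lemma color_chi_k:
  assumes rng: "\<And>v. v \<in> V \<Longrightarrow> \<kappa> v < n"
    and good: "\<And>u w. u \<in> V \<Longrightarrow> w \<in> V \<Longrightarrow> \<kappa> u = \<kappa> w \<Longrightarrow>
       \<exists>xs. sp u xs w \<and> (\<forall>z\<in>internal xs. \<kappa> z \<noteq> \<kappa> u) \<and> length xs \<le> Suc k"
  shows "chi_mu_k k V E \<le> n"
proof -
  obtain P where P: "partition_on V P" "finite P" "card P \<le> n" "\<forall>M\<in>P. \<exists>i. M = {v\<in>V. \<kappa> v = i}"
    using color_partition[where \<kappa>=\<kappa> and n=n] rng by blast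
  have "\<forall>M\<in>P. k_dist_mutual_visibility_set k V E M"
  proof
    fix M assume "M \<in> P"
    then obtain i where M: "M = {v\<in>V. \<kappa> v = i}" using P(4) by blast
    show "k_dist_mutual_visibility_set k V E M" unfolding k_dist_mutual_visibility_set_def
    proof (intro conjI ballI)
      show "M \<subseteq> V" using M by auto
      fix u w assume "u \<in> M" "w \<in> M"
      then obtain xs where "sp u xs w" "\<forall>z\<in>internal xs. \<kappa> z \<noteq> \<kappa> u" "length xs \<le> Suc k"
        using good M by force
      then show "\<exists>xs. shortest_path V E u xs w \<and> internal xs \<inter> M = {} \<and> length xs \<le> Suc k"
        using M \<open>u \<in> M\<close> by auto
    qed
  qed
  then have "chi_mu_k k V E \<le> card P" by (rule chi_k_le[OF P(1,2)])
  then show ?thesis using P(3) by simp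
qed

lemma chi_k_ge_set:
  assumes fin: "finite R" and pV: "\<And>K. K \<in> R \<Longrightarrow> p K \<in> V"
    and far: "\<And>K K'. K \<in> R \<Longrightarrow> K' \<in> R \<Longrightarrow> K \<noteq> K' \<Longrightarrow> d (p K) (p K') = D"
    and D1: "D \<ge> 1"
  shows "card R \<le> chi_mu_k (D - 1) V E"
proof -
  obtain P where P: "partition_on V P" "finite P" "card P = chi_mu_k (D - 1) V E"
    "\<forall>M\<in>P. k_dist_mutual_visibility_set (D - 1) V E M" using chi_k_wit by blast
  define \<phi> where "\<phi> K = (SOME M. M \<in> P \<and> p K \<in> M)" for K
  have phi: "\<phi> K \<in> P \<and> p K \<in> \<phi> K" if "K \<in> R" for K
  proof -
    have "\<exists>M. M \<in> P \<and> p K \<in> M" using P(1) pV[OF that] unfolding partition_on_def by blast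
    then show ?thesis unfolding \<phi>_def by (rule someI_ex)
  qed
  have "inj_on \<phi> R"
  proof (rule inj_onI)
    fix K K' assume KK: "K \<in> R" "K' \<in> R" "\<phi> K = \<phi> K'"
    show "K = K'"
    proof (rule ccontr)
      assume ne: "K \<noteq> K'"
      let ?M = "\<phi> K"
      have "p K \<in> ?M" "p K' \<in> ?M" "?M \<in> P" using phi KK by auto
      then obtain xs where "sp (p K) xs (p K')" "length xs \<le> Suc (D - 1)"
        using P(4) unfolding k_dist_mutual_visibility_set_def by blast
      then have "Suc (d (p K) (p K')) \<le> D" using sp_len D1 by fastforce
      then show False using far[OF KK(1,2) ne] by simp
    qed
  qed
  moreover have "\<phi> ` R \<subseteq> P" using phi by auto
  ultimately have "card R \<le> card P" using card_inj_on_le P(2) by blast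
  then show ?thesis using P(3) by simp
qed

lemma good_sym:
  assumes "sp u xs w" "\<forall>z\<in>internal xs. \<kappa> z \<noteq> \<kappa> u" "\<kappa> u = \<kappa> w"
  shows "sp w (rev xs) u \<and> (\<forall>z\<in>internal (rev xs). \<kappa> z \<noteq> \<kappa> w) \<and> length (rev xs) = length xs"
proof -
  have "internal (rev xs) = internal xs" by (rule internal_rev)
  then show ?thesis using assms sp_rev by auto
qed

end

lemma set_tl_sub: "set (tl xs) \<subseteq> set xs" by (cases xs) auto

lemma internal_distinct:
  assumes "distinct xs" "z \<in> internal xs"
  shows "z \<in> set xs" "z \<noteq> xs!0" "z \<noteq> xs!(length xs - 1)"
proof -
  obtain p where p: "0 < p" "Suc p < length xs" "xs!p = z" using assms(2) unfolding internal_iff by blast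
  show "z \<in> set xs" using p by auto
  have l: "p < length xs" "0 < length xs" "length xs - 1 < length xs" using p by auto
  show "z \<noteq> xs!0" using p nth_eq_iff_index_eq[OF assms(1) l(1) l(2)] by auto
  show "z \<noteq> xs!(length xs - 1)" using p nth_eq_iff_index_eq[OF assms(1) l(1) l(3)] by auto
qed

locale bg_even = bg +
  fixes c
  assumes Cc: "center V E = {c}" and ev: "diam V E = 2 * rad V E" and D2: "diam V E \<ge> 2"
begin

abbreviation "Ee \<equiv> E - {e\<in>E. \<exists>x\<in>center V E. x \<in> e}"
definition "conn u w \<longleftrightarrow> (\<exists>xs. walk_betw V Ee u xs w)"
definition "cmpt u = {w\<in>V. conn u w}"

lemma cV: "c \<in> V" using Cc center_iff by auto
lemma r1: "r \<ge> 1" using ev D2 by simp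
lemma lev_le: "v \<in> V \<Longrightarrow> d v c \<le> r" using center_dist[of c v] Cc by auto
lemma lev_pos: "v \<in> V \<Longrightarrow> v \<noteq> c \<Longrightarrow> d v c \<ge> 1"
proof (rule ccontr)
  assume "v \<in> V" "v \<noteq> c" "\<not> d v c \<ge> 1"
  then show False using dist_0[of v c] cV by simp
qed

lemma Ee_c: "e \<in> Ee \<Longrightarrow> c \<notin> e" using Cc by auto

lemma walkE_avoid:
  assumes w: "walk_betw V Ee u xs w" and u: "u \<noteq> c"
  shows "c \<notin> set xs"
proof
  assume "c \<in> set xs"
  then obtain p where p: "p < length xs" "xs!p = c" by (auto simp: in_set_conv_nth)
  have ne: "xs \<noteq> []" using w by (simp add: walk_betw_def walk_in_def)
  have "p \<noteq> 0"
  proof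
    assume "p = 0"
    then have "c = hd xs" using p ne by (simp add: hd_conv_nth)
    then show False using w u by (simp add: walk_betw_def)
  qed
  then obtain q where q: "p = Suc q" by (cases p) auto
  then have "{xs!q, xs!Suc q} \<in> Ee" using w p unfolding walk_betw_def walk_in_def by blast
  then have "c \<notin> {xs!q, xs!Suc q}" by (rule Ee_c)
  then show False using p q by simp
qed

lemma walkE_E: "walk_betw V Ee u xs w \<Longrightarrow> walk_betw V E u xs w"
  by (rule walk_betw_edges_mono) (auto simp: walk_betw_def walk_in_def)

lemma walk_to_Ee:
  assumes w: "walk_betw V E u xs w" and nc: "c \<notin> set xs"
  shows "walk_betw V Ee u xs w"
proof (rule walk_betw_edges_mono[OF w])
  fix i assume i: "Suc i < length xs"
  have "{xs!i, xs!Suc i} \<in> E" using w i unfolding walk_betw_def walk_in_def by simp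
  moreover have "xs!i \<noteq> c" "xs!Suc i \<noteq> c" using nc i by (auto dest: nth_mem)
  ultimately show "{xs!i, xs!Suc i} \<in> Ee" using Cc by auto
qed

lemma conn_refl: "u \<in> V \<Longrightarrow> conn u u"
  unfolding conn_def using walk_betw_single[of u V Ee] by blast
lemma conn_sym: assumes "conn u w" shows "conn w u"
proof -
  obtain xs where "walk_betw V Ee u xs w" using assms conn_def by blast
  from walk_rev[OF this] show ?thesis unfolding conn_def by blast
qed
lemma conn_trans: assumes "conn u w" "conn w x" shows "conn u x"
proof -
  obtain xs ys where "walk_betw V Ee u xs w" "walk_betw V Ee w ys x" using assms conn_def by blast
  from walk_append[OF this] show ?thesis unfolding conn_def by blast
qed
lemma conn_V: assumes "conn u w" shows "u \<in> V \<and> w \<in> V"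
proof -
  obtain xs where w: "walk_betw V Ee u xs w" using assms conn_def by blast
  have "u \<in> set xs" "w \<in> set xs" using walk_ends_in[OF w] by auto
  then show ?thesis using walk_betw_set[OF w] by auto
qed

lemma cmpt_eq: "u \<in> V \<Longrightarrow> w \<in> V \<Longrightarrow> cmpt u = cmpt w \<longleftrightarrow> conn u w"
proof
  assume "u \<in> V" "w \<in> V" "cmpt u = cmpt w"
  then have "w \<in> cmpt u" using conn_refl unfolding cmpt_def by auto
  then show "conn u w" unfolding cmpt_def by auto
next
  assume "conn u w"
  then show "cmpt u = cmpt w" unfolding cmpt_def using conn_sym conn_trans by blast
qed

lemma conn_cmpt: "conn u w \<Longrightarrow> cmpt u = cmpt w"
  using cmpt_eq[of u w] conn_V[of u w] by blast

lemma sp_conn: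
  assumes g: "sp u g x" and nc: "c \<notin> set g" and ij: "i \<le> j" "j \<le> d u x"
  shows "conn (g!i) (g!j)"
proof -
  have wi: "walk_in V E g" using sp_walk[OF g] by (simp add: walk_betw_def)
  have l: "j < length g" using sp_len[OF g] ij by simp
  have w: "walk_betw V E (g!i) (take (Suc j - i) (drop i g)) (g!j)" using walk_in_take_drop[OF wi ij(1) l] .
  have "set (take (Suc j - i) (drop i g)) \<subseteq> set g"
    using subset_trans[OF set_take_subset set_drop_subset] .
  then show ?thesis unfolding conn_def using walk_to_Ee[OF w] nc by blast
qed

lemma to_c:
  assumes g: "sp x g c" and x: "x \<in> V" and p: "p < d x c"
  shows "g!p \<noteq> c" "conn x (g!p)" "d (g!p) c = d x c - p"
proof -
  have lg: "length g = Suc (d x c)" using sp_len[OF g] .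
  have gl: "g!(d x c) = c" using sp_last[OF g] .
  have dg: "distinct g" using sp_distinct[OF g] .
  show nc: "g!p \<noteq> c" using nth_eq_iff_index_eq[OF dg, of p "d x c"] p lg gl by auto
  have "c \<notin> set (take (Suc p) g)" using distinct_nth_notin_take[OF dg p] lg gl by simp
  moreover have "walk_betw V E x (take (Suc p) g) (g!p)"
    using walk_in_take_drop[of V E g 0 p] sp_walk[OF g] p lg sp_hd[OF g]
    by (simp add: walk_betw_def)
  ultimately show "conn x (g!p)" unfolding conn_def using walk_to_Ee by blast
  show "d (g!p) c = d x c - p" using sp_nth[OF g, of p "d x c"] p lg gl by simp
qed

lemma conn_iff:
  assumes u: "u \<in> V" "u \<noteq> c" and w: "w \<in> V" "w \<noteq> c"
  shows "conn u w \<longleftrightarrow> d u w < d u c + d w c"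
proof
  assume "d u w < d u c + d w c"
  obtain g where g: "sp u g w" using sp_ex u w by blast
  have "c \<notin> set g"
  proof
    assume "c \<in> set g"
    then obtain p where p: "p < length g" "g!p = c" by (auto simp: in_set_conv_nth)
    have "d u c = p" using sp_nth0[OF g p(1)] p(2) by simp
    moreover have "d c w = d u w - p" using sp_nth[OF g, of p "d u w"] p sp_len[OF g] sp_last[OF g] by simp
    ultimately show False using \<open>d u w < d u c + d w c\<close> dist_sym[OF cV w(1)] p(1) sp_len[OF g] by simp
  qed
  then show "conn u w" using sp_conn[OF g, of 0 "d u w"] sp_hd[OF g] sp_last[OF g] by simp
next
  assume cw: "conn u w"
  show "d u w < d u c + d w c"
  proof (cases "u = w")
    case True
    have "d w w = 0" using dist_refl w(1) by simp
    moreover have "d w c \<ge> 1" using lev_pos w by simp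
    ultimately show ?thesis using True by simp
  next
    case False
    obtain xs where xs: "walk_betw V Ee u xs w" using cw conn_def by blast
    have ncx: "c \<notin> set xs" using walkE_avoid[OF xs u(2)] .
    show ?thesis
    proof (rule ccontr)
      assume "\<not> ?thesis"
      then have eq: "d u c + d c w = d u w" using dist_tri[OF u(1) w(1) cV] dist_sym[OF cV w(1)] by simp
      obtain g where g: "sp u g w" using sp_ex u w by blast
      let ?p = "d u c" and ?k = "d u w"
      have lg: "length g = Suc ?k" using sp_len[OF g] .
      have gp: "g!?p = c" using sp_between[OF g cV eq] .
      have p0: "0 < ?p" using lev_pos[OF u] by simp
      have pk: "?p < ?k" using eq lev_pos[OF w] dist_sym[OF cV w(1)] by simp
      define a where "a = g!(?p - 1)"
      define b where "b = g!Suc ?p"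
      have wi: "walk_in V E g" using sp_walk[OF g] by (simp add: walk_betw_def)
      obtain q where q: "?p = Suc q" using p0 by (cases ?p) auto
      have "{g!q, g!Suc q} \<in> E" using wi pk lg q unfolding walk_in_def by simp
      then have ea: "{a, c} \<in> E" using gp q unfolding a_def by simp
      have "{g!?p, g!Suc ?p} \<in> E" using wi pk lg unfolding walk_in_def by simp
      then have eb: "{c, b} \<in> E" using gp unfolding b_def by simp
      have dab: "d a b = 2" using sp_nth[OF g, of "?p - 1" "Suc ?p"] p0 pk lg unfolding a_def b_def by simp
      have ab: "a \<noteq> b" using dab dist_refl nth_sp_V[OF g, of "Suc ?p"] pk unfolding b_def by auto
      have dg: "distinct g" using sp_distinct[OF g] .
      have w1: "walk_betw V E u (take ?p g) a"
        using walk_in_take_drop[OF wi, of 0 "?p - 1"] p0 pk lg sp_hd[OF g] unfolding a_def by simp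
      have w2: "walk_betw V E b (drop (Suc ?p) g) w"
        using walk_in_take_drop[OF wi, of "Suc ?p" ?k] pk lg sp_last[OF g] unfolding b_def by simp
      have nc1: "c \<notin> set (take ?p g)"
      proof
        assume "c \<in> set (take ?p g)"
        then obtain q where "q < ?p" "g!q = c" by (auto simp: in_set_conv_nth)
        then show False using nth_eq_iff_index_eq[OF dg, of q ?p] gp pk lg by simp
      qed
      have nc2: "c \<notin> set (drop (Suc ?p) g)"
        using distinct_nth_notin_drop[OF dg, of ?p "Suc ?p"] gp pk lg by simp
      let ?W = "rev (take ?p g) @ tl (xs @ tl (rev (drop (Suc ?p) g)))"
      have W: "walk_betw V E a ?W b"
        using walk_append[OF walk_rev[OF w1] walk_append[OF walkE_E[OF xs] walk_rev[OF w2]]] .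
      have "set ?W \<subseteq> set (take ?p g) \<union> set xs \<union> set (drop (Suc ?p) g)"
        using set_tl_sub[of "xs @ tl (rev (drop (Suc ?p) g))"] set_tl_sub[of "rev (drop (Suc ?p) g)"] by auto
      then have "c \<notin> set ?W" using nc1 nc2 ncx by blast
      then have "set ?W \<subseteq> V - {c}" using walk_betw_set[OF W] by blast
      then have "walk_betw (V - {c}) E a ?W b" by (rule walk_betw_mono[OF W])
      then have "{a,b} \<in> E" using R[OF ea eb ab] by blast
      then show False using dist_edge dab by simp
    qed
  qed
qed

definition "kap h v = (if v = c then 0 else sw (h (cmpt v)) r (d v c))"

lemma kap_rng: "(\<And>X. h X \<le> r) \<Longrightarrow> v \<in> V \<Longrightarrow> kap h v \<le> r"
  unfolding kap_def using sw_le lev_le by auto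

lemma kap_nc: "v \<noteq> c \<Longrightarrow> kap h v = sw (h (cmpt v)) r (d v c)"
  by (simp add: kap_def)

lemma kap_zero:
  assumes v: "v \<in> V" "v \<noteq> c" and k: "kap h v = 0" shows "h (cmpt v) = 0" "d v c = r"
proof -
  have sw0: "sw (h (cmpt v)) r (d v c) = 0" using k kap_nc[OF v(2)] by simp
  have pos: "0 < d v c" "0 < r" using lev_pos[OF v] r1 by auto
  show "h (cmpt v) = 0" "d v c = r" using sw_zero[OF pos sw0] by auto
qed

lemma kap_ne: assumes "z \<noteq> c" "u \<noteq> c" "cmpt z = cmpt u" "d z c \<noteq> d u c" shows "kap h z \<noteq> kap h u"
proof
  assume "kap h z = kap h u"
  then have "sw (h (cmpt u)) r (d z c) = sw (h (cmpt u)) r (d u c)" using kap_nc assms by simp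
  then show False using sw_inj assms(4) by blast
qed

lemma good_c:
  assumes hr: "\<And>X. h X \<le> r" and w: "w \<in> V" "w \<noteq> c" and k: "kap h c = kap h w"
  shows "\<exists>xs. sp c xs w \<and> (\<forall>z\<in>internal xs. kap h z \<noteq> kap h c) \<and> length xs \<le> D"
proof -
  have sw0: "sw (h (cmpt w)) r (d w c) = 0" using k kap_nc[OF w(2)] by (simp add: kap_def)
  have pos: "0 < d w c" "0 < r" using lev_pos[OF w] r1 by auto
  have lw: "d w c = r" and hw: "h (cmpt w) = 0" using sw_zero[OF pos sw0] by auto
  obtain g where g: "sp w g c" using sp_ex w cV by blast
  have "\<forall>z\<in>internal g. kap h z \<noteq> kap h c"
  proof
    fix z assume "z \<in> internal g"
    then obtain p where p: "0 < p" "Suc p < length g" "g!p = z" unfolding internal_iff by blast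
    have pl: "p < d w c" using p sp_len[OF g] by simp
    have zc: "z \<noteq> c" "conn w z" "d z c = r - p" using to_c[OF g w(1) pl] p lw by auto
    have "cmpt z = cmpt w" using conn_cmpt[OF zc(2)] by simp
    then have "kap h z = sw 0 r (r - p)" using kap_nc[OF zc(1)] zc hw by simp
    moreover have "r - p > 0" "r - p \<noteq> r" using pl lw p by auto
    ultimately have "kap h z \<noteq> 0" using sw_zero[of "r - p" r 0] r1 by auto
    then show "kap h z \<noteq> kap h c" by (simp add: kap_def)
  qed
  moreover have "length g \<le> D" using sp_len[OF g] lw ev r1 by simp
  ultimately show ?thesis using sp_rev[OF g] internal_rev[of g] by (intro exI[of _ "rev g"]) simp
qed

lemma good_same:
  assumes u: "u \<in> V" "u \<noteq> c" and w: "w \<in> V" "w \<noteq> c" and cuw: "conn u w" and k: "kap h u = kap h w"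
  shows "\<exists>xs. sp u xs w \<and> (\<forall>z\<in>internal xs. kap h z \<noteq> kap h u) \<and> length xs \<le> D"
proof -
  have cc: "cmpt u = cmpt w" using conn_cmpt[OF cuw] .
  have "sw (h (cmpt u)) r (d u c) = sw (h (cmpt u)) r (d w c)" using k kap_nc u w cc by simp
  then have ll: "d u c = d w c" using sw_inj by blast
  let ?l = "d u c"
  have lt: "d u w < 2 * ?l" using conn_iff[OF u w] cuw ll by simp
  obtain g where g: "sp u g w" using sp_ex u w by blast
  have "\<forall>z\<in>internal g. kap h z \<noteq> kap h u"
  proof
    fix z assume "z \<in> internal g"
    then obtain p where p: "0 < p" "Suc p < length g" "g!p = z" unfolding internal_iff by blast
    have pk: "p < d u w" using p sp_len[OF g] by simp
    have ncg: "c \<notin> set g"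
    proof
      assume "c \<in> set g"
      then obtain q where q: "q < length g" "g!q = c" by (auto simp: in_set_conv_nth)
      have "d u c = q" using sp_nth0[OF g q(1)] q(2) by simp
      moreover have "d c w = d u w - q" using sp_nth[OF g, of q "d u w"] q sp_len[OF g] sp_last[OF g] by simp
      ultimately show False using lt ll dist_sym[OF cV w(1)] q(1) sp_len[OF g] by simp
    qed
    have zc: "z \<noteq> c" using ncg p by auto
    have "conn u z" using sp_conn[OF g ncg, of 0 p] pk sp_hd[OF g] p by simp
    then have cz: "cmpt z = cmpt u" using conn_cmpt by simp
    have "d c z \<le> max (d c u - p) (d c w - (d u w - p))" using sp_profile[OF g cV, of p] pk p by simp
    moreover have "d c z = d z c" "d c u = ?l" "d c w = ?l"
      using dist_sym cV u(1) w(1) ll conn_V[OF \<open>conn u z\<close>] by auto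
    ultimately have dz: "d z c \<le> max (?l - p) (?l - (d u w - p))" by simp
    have "?l - p < ?l" "?l - (d u w - p) < ?l" using p pk lev_pos[OF u] by auto
    then have "max (?l - p) (?l - (d u w - p)) < ?l" by simp
    then have "d z c < ?l" using dz by linarith
    then have "d z c \<noteq> ?l" by simp
    then show "kap h z \<noteq> kap h u" using kap_ne zc u cz by blast
  qed
  moreover have "length g \<le> D" using sp_len[OF g] lt lev_le[OF u(1)] ev by simp
  ultimately show ?thesis using g by blast
qed

lemma good_diff:
  assumes hz: "\<And>u w. u \<in> V \<Longrightarrow> w \<in> V \<Longrightarrow> u \<noteq> c \<Longrightarrow> w \<noteq> c \<Longrightarrow> h (cmpt u) = 0 \<Longrightarrow> h (cmpt w) = 0 \<Longrightarrow> cmpt u = cmpt w"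
    and u: "u \<in> V" "u \<noteq> c" and w: "w \<in> V" "w \<noteq> c" and ncuw: "\<not> conn u w" and k: "kap h u = kap h w"
  shows "\<exists>xs. sp u xs w \<and> (\<forall>z\<in>internal xs. kap h z \<noteq> kap h u) \<and>
     (length xs \<le> D \<or> (d u c = r \<and> d w c = r))"
proof -
  have eq: "d u c + d c w = d u w"
    using conn_iff[OF u w] ncuw dist_tri[OF u(1) w(1) cV] dist_sym[OF cV w(1)] by simp
  obtain g1 where g1: "sp u g1 c" using sp_ex u cV by blast
  obtain g2 where g2: "sp w g2 c" using sp_ex w cV by blast
  have g2': "sp c (rev g2) w" using sp_rev[OF g2] .
  let ?xs = "g1 @ tl (rev g2)"
  have xs: "sp u ?xs w" using sp_join[OF g1 g2' eq] .
  have dx: "distinct ?xs" using sp_distinct[OF xs] .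
  have x0: "?xs!0 = u" and xl: "?xs!(length ?xs - 1) = w"
    using sp_hd[OF xs] sp_last[OF xs] sp_len[OF xs] by auto
  have "\<forall>z\<in>internal ?xs. kap h z \<noteq> kap h u"
  proof
    fix z assume zi: "z \<in> internal ?xs"
    have zs: "z \<in> set ?xs" "z \<noteq> u" "z \<noteq> w" using internal_distinct[OF dx zi] x0 xl by auto
    have "set (tl (rev g2)) \<subseteq> set g2" using set_tl_sub[of "rev g2"] by simp
    then have "z \<in> set g1 \<or> z \<in> set g2" using zs(1) by auto
    then show "kap h z \<noteq> kap h u"
    proof
      assume "z \<in> set g1"
      then obtain p where p: "p < length g1" "g1!p = z" by (auto simp: in_set_conv_nth)
      have "p \<noteq> 0"
      proof
        assume "p = 0" then have "z = u" using p(2) sp_hd[OF g1] by simp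
        then show False using zs(2) by simp
      qed
      show ?thesis
      proof (cases "p = d u c")
        case True
        then have "z = c" using p sp_last[OF g1] by simp
        have "kap h u \<noteq> 0"
        proof
          assume k0: "kap h u = 0"
          then have "h (cmpt u) = 0" using kap_zero[OF u] by blast
          moreover have "h (cmpt w) = 0" using k k0 kap_zero[OF w] by simp
          ultimately have "cmpt u = cmpt w" using hz u w by blast
          then show False using cmpt_eq[OF u(1) w(1)] ncuw by simp
        qed
        then show ?thesis using \<open>z = c\<close> by (simp add: kap_def)
      next
        case False
        then have pl: "p < d u c" using p sp_len[OF g1] by simp
        have zc: "z \<noteq> c" "conn u z" "d z c = d u c - p" using to_c[OF g1 u(1) pl] p by auto
        have "cmpt z = cmpt u" using conn_cmpt[OF zc(2)] by simp
        moreover have "d z c \<noteq> d u c" using zc(3) \<open>p \<noteq> 0\<close> pl by simp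
        ultimately show ?thesis using kap_ne zc(1) u(2) by blast
      qed
    next
      assume "z \<in> set g2"
      then obtain p where p: "p < length g2" "g2!p = z" by (auto simp: in_set_conv_nth)
      have "p \<noteq> 0"
      proof
        assume "p = 0" then have "z = w" using p(2) sp_hd[OF g2] by simp
        then show False using zs(3) by simp
      qed
      show ?thesis
      proof (cases "p = d w c")
        case True
        then have "z = c" using p sp_last[OF g2] by simp
        have "kap h u \<noteq> 0"
        proof
          assume k0: "kap h u = 0"
          then have "h (cmpt u) = 0" using kap_zero[OF u] by blast
          moreover have "h (cmpt w) = 0" using k k0 kap_zero[OF w] by simp
          ultimately have "cmpt u = cmpt w" using hz u w by blast
          then show False using cmpt_eq[OF u(1) w(1)] ncuw by simp
        qed
        then show ?thesis using \<open>z = c\<close> by (simp add: kap_def)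
      next
        case False
        then have pl: "p < d w c" using p sp_len[OF g2] by simp
        have zc: "z \<noteq> c" "conn w z" "d z c = d w c - p" using to_c[OF g2 w(1) pl] p by auto
        have "cmpt z = cmpt w" using conn_cmpt[OF zc(2)] by simp
        moreover have "d z c \<noteq> d w c" using zc(3) \<open>p \<noteq> 0\<close> pl by simp
        ultimately show ?thesis using kap_ne[OF zc(1) w(2)] k by simp
      qed
    qed
  qed
  moreover have "length ?xs \<le> D \<or> (d u c = r \<and> d w c = r)"
  proof -
    have "length ?xs = Suc (d u c + d w c)" using sp_len[OF xs] eq dist_sym[OF cV w(1)] by simp
    moreover have "d u c \<le> r" "d w c \<le> r" using lev_le u w by auto
    ultimately show ?thesis using ev by linarith
  qed
  ultimately show ?thesis using xs by blast
qed

end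

context bg_even begin

lemma good_all:
  assumes hr: "\<And>X. h X \<le> r"
    and hz: "\<And>u w. u \<in> V \<Longrightarrow> w \<in> V \<Longrightarrow> u \<noteq> c \<Longrightarrow> w \<noteq> c \<Longrightarrow> h (cmpt u) = 0 \<Longrightarrow> h (cmpt w) = 0 \<Longrightarrow> cmpt u = cmpt w"
    and u: "u \<in> V" and w: "w \<in> V" and k: "kap h u = kap h w"
  shows "\<exists>xs. sp u xs w \<and> (\<forall>z\<in>internal xs. kap h z \<noteq> kap h u) \<and>
     (length xs \<le> D \<or> (u \<noteq> c \<and> w \<noteq> c \<and> d u c = r \<and> d w c = r \<and> \<not> conn u w))"
proof (cases "u = w")
  case True
  then show ?thesis using sp_refl[OF u] D2 by (intro exI[of _ "[u]"]) simp
next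
  case uw: False
  show ?thesis
  proof (cases "u = c")
    case True
    then have "w \<noteq> c" using uw by simp
    moreover have "kap h c = kap h w" using k True by simp
    ultimately obtain xs where xs: "sp c xs w" "\<forall>z\<in>internal xs. kap h z \<noteq> kap h c" "length xs \<le> D"
      using good_c[where h=h, OF hr w] by blast
    then show ?thesis using True by (intro exI[of _ xs]) simp
  next
    case uc: False
    show ?thesis
    proof (cases "w = c")
      case True
      obtain xs where xs: "sp c xs u" "\<forall>z\<in>internal xs. kap h z \<noteq> kap h c" "length xs \<le> D"
        using good_c[where h=h, OF hr u uc] k True by auto
      have "sp u (rev xs) c \<and> (\<forall>z\<in>internal (rev xs). kap h z \<noteq> kap h u) \<and> length (rev xs) = length xs"
        using good_sym[OF xs(1,2)] k True by simp
      then show ?thesis using xs(3) True by (intro exI[of _ "rev xs"]) simp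
    next
      case wc: False
      show ?thesis
      proof (cases "conn u w")
        case True
        obtain xs where xs: "sp u xs w" "\<forall>z\<in>internal xs. kap h z \<noteq> kap h u" "length xs \<le> D"
          using good_same[where h=h, OF u uc w wc True k] by blast
        then show ?thesis by (intro exI[of _ xs]) simp
      next
        case False
        obtain xs where xs: "sp u xs w" "\<forall>z\<in>internal xs. kap h z \<noteq> kap h u"
          "length xs \<le> D \<or> (d u c = r \<and> d w c = r)"
          using good_diff[where h=h, OF hz u uc w wc False k] by blast
        then show ?thesis using uc wc False by (intro exI[of _ xs]) auto
      qed
    qed
  qed
qed

lemma radial_iff: "radial V E u \<longleftrightarrow> u \<in> V \<and> d u c = r"
  unfolding radial_def using Cc by simp

lemma components_eq: "components V Ee = cmpt ` V"
  unfolding components_def cmpt_def conn_def by simp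

definition "RC = {K \<in> components V Ee. \<exists>u\<in>K. radial V E u}"

lemma deg_eq: "deg_star_center V E = card RC"
proof -
  have "card (center V E) = 1" using Cc by simp
  then show ?thesis unfolding deg_star_center_def RC_def Let_def by simp
qed

lemma RC_fin: "finite RC"
proof -
  have "RC \<subseteq> cmpt ` V" unfolding RC_def components_eq by auto
  then show ?thesis using finV finite_subset by blast
qed

lemma cmpt_self: "u \<in> V \<Longrightarrow> u \<in> cmpt u"
  unfolding cmpt_def using conn_refl by simp

lemma RC_rep:
  assumes "K \<in> RC"
  shows "\<exists>u. u \<in> V \<and> u \<noteq> c \<and> d u c = r \<and> K = cmpt u"
proof -
  obtain x u where x: "x \<in> V" "K = cmpt x" "u \<in> K" "radial V E u"
    using assms unfolding RC_def components_eq by blast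
  have "conn x u" using x unfolding cmpt_def by simp
  then have "K = cmpt u" using conn_cmpt x by simp
  moreover have "u \<in> V" "d u c = r" using x radial_iff by auto
  moreover have "u \<noteq> c" using \<open>d u c = r\<close> r1 dist_refl cV by auto
  ultimately show ?thesis by blast
qed

lemma radial_RC: "u \<in> V \<Longrightarrow> d u c = r \<Longrightarrow> cmpt u \<in> RC"
  unfolding RC_def components_eq using cmpt_self radial_iff by auto

lemma chi_even_le: "chi_mu V E \<le> r + 1"
proof (rule color_chi[where \<kappa> = "kap (\<lambda>_. r)"])
  fix v assume "v \<in> V" then show "kap (\<lambda>_. r) v < r + 1" using kap_rng[of "\<lambda>_. r"] by fastforce
next
  fix u w assume "u \<in> V" "w \<in> V" "kap (\<lambda>_. r) u = kap (\<lambda>_. r) w"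
  then show "\<exists>xs. sp u xs w \<and> (\<forall>z\<in>internal xs. kap (\<lambda>_. r) z \<noteq> kap (\<lambda>_. r) u)"
    using good_all[of "\<lambda>_. r"] r1 by fastforce
qed

lemma chik_even_le:
  assumes card: "card RC \<le> r + 1"
  shows "chi_mu_k (D - 1) V E \<le> r + 1"
proof -
  have "card RC \<le> card {..<r+1}" using card by simp
  then obtain f where f: "f ` RC \<subseteq> {..<r+1}" "inj_on f RC"
    using card_le_inj[OF RC_fin finite_lessThan] by blast
  define h where "h X = (if X \<in> RC then f X else r)" for X
  have hr: "h X \<le> r" for X using f unfolding h_def by (auto simp: less_Suc_eq_le)
  have hz: "cmpt u = cmpt w" if "h (cmpt u) = 0" "h (cmpt w) = 0" for u w
  proof -
    have "cmpt u \<in> RC" "cmpt w \<in> RC" using that r1 unfolding h_def by (auto split: if_splits)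
    moreover have "f (cmpt u) = f (cmpt w)" using that calculation unfolding h_def by simp
    ultimately show ?thesis using f(2) by (meson inj_onD)
  qed
  show ?thesis
  proof (rule color_chi_k[where \<kappa> = "kap h"])
    fix v assume "v \<in> V" then show "kap h v < r + 1" using kap_rng[of h, OF hr] by fastforce
  next
    fix u w assume uw: "u \<in> V" "w \<in> V" and k: "kap h u = kap h w"
    obtain xs where xs: "sp u xs w" "\<forall>z\<in>internal xs. kap h z \<noteq> kap h u"
      "length xs \<le> D \<or> (u \<noteq> c \<and> w \<noteq> c \<and> d u c = r \<and> d w c = r \<and> \<not> conn u w)"
      using good_all[of h, OF hr hz uw k] by blast
    have "length xs \<le> D"
    proof (rule ccontr)
      assume "\<not> length xs \<le> D"
      then have *: "u \<noteq> c" "w \<noteq> c" "d u c = r" "d w c = r" "\<not> conn u w" using xs(3) by auto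
      have R: "cmpt u \<in> RC" "cmpt w \<in> RC" using radial_RC * uw by auto
      have ne: "cmpt u \<noteq> cmpt w" using cmpt_eq[OF uw] *(5) by simp
      have "kap h u = f (cmpt u)" "kap h w = f (cmpt w)" using kap_nc * R unfolding h_def by auto
      then have "f (cmpt u) = f (cmpt w)" using k by simp
      then show False using f(2) R ne by (meson inj_onD)
    qed
    then show "\<exists>xs. sp u xs w \<and> (\<forall>z\<in>internal xs. kap h z \<noteq> kap h u) \<and> length xs \<le> Suc (D - 1)"
      using xs D2 by (intro exI[of _ xs]) simp
  qed
qed

lemma chik_even_ge: "card RC \<le> chi_mu_k (D - 1) V E"
proof -
  define p where "p K = (SOME u. u \<in> V \<and> u \<noteq> c \<and> d u c = r \<and> K = cmpt u)" for K
  have p: "p K \<in> V \<and> p K \<noteq> c \<and> d (p K) c = r \<and> K = cmpt (p K)" if "K \<in> RC" for K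
    unfolding p_def using RC_rep[OF that] by (rule someI_ex)
  show ?thesis
  proof (rule chi_k_ge_set[OF RC_fin])
    fix K assume "K \<in> RC" then show "p K \<in> V" using p by blast
  next
    fix K K' assume KK: "K \<in> RC" "K' \<in> RC" "K \<noteq> K'"
    have pk: "p K \<in> V" "p K \<noteq> c" "d (p K) c = r" "K = cmpt (p K)" using p KK(1) by auto
    have pk': "p K' \<in> V" "p K' \<noteq> c" "d (p K') c = r" "K' = cmpt (p K')" using p KK(2) by auto
    have "\<not> conn (p K) (p K')" using cmpt_eq[OF pk(1) pk'(1)] pk(4) pk'(4) KK(3) by simp
    then have "\<not> d (p K) (p K') < 2 * r" using conn_iff[OF pk(1,2) pk'(1,2)] pk(3) pk'(3) by simp
    moreover have "d (p K) (p K') \<le> D" using diam_ge pk pk' by simp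
    ultimately show "d (p K) (p K') = D" using ev by simp
  next
    show "D \<ge> 1" using D2 by simp
  qed
qed

end

locale bg_odd = bg +
  assumes od: "diam V E + 1 = 2 * rad V E" and D2: "diam V E \<ge> 2"
begin

lemma r2: "r \<ge> 2" using od D2 by simp

lemma CV: "C \<subseteq> V" using center_iff by auto
lemma finC: "finite C" using CV finV finite_subset by blast

lemma cc: obtains c1 c2 where "c1 \<in> C" "c2 \<in> C" "{c1,c2} \<in> E" "\<forall>c\<in>C. d c c1 \<le> 1 \<and> d c c2 \<le> 1"
  using odd_center[OF od D2] by blast

lemma Cne: "C \<noteq> {}" using cc by blast

lemma clique: "a \<in> C \<Longrightarrow> b \<in> C \<Longrightarrow> a \<noteq> b \<Longrightarrow> {a,b} \<in> E"
  using odd_clique[OF od D2] by blast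

lemma N:
  assumes y: "y \<in> V" and ya: "{y,a} \<in> E" and yb: "{y,b} \<in> E" and a: "a \<in> C" and b: "b \<in> C" and ab: "a \<noteq> b"
  shows "y \<in> C"
proof (rule ccontr)
  assume yC: "y \<notin> C"
  have aV: "a \<in> V" and bV: "b \<in> V" using a b CV by auto
  have "ecc V E y \<ge> r" using rad_le[OF y] .
  moreover have "ecc V E y \<noteq> r" using yC y center_iff by auto
  ultimately have gt: "ecc V E y > r" by simp
  obtain z where z: "z \<in> V" "d z y = ecc V E y" using ecc_ex by blast
  have za: "d z a \<le> r" and zb: "d z b \<le> r" using center_dist a b z(1) by auto
  have "d z y \<le> d z a + d a y" using dist_tri z(1) y aV by blast
  moreover have "d a y = 1" using dist_edge[OF ya] dist_sym[OF y aV] by simp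
  ultimately have eqa: "d z a + d a y = d z y" and ra: "d z a = r" using gt za z(2) by linarith+
  have "d z y \<le> d z b + d b y" using dist_tri z(1) y bV by blast
  moreover have "d b y = 1" using dist_edge[OF yb] dist_sym[OF y bV] by simp
  ultimately have eqb: "d z b + d b y = d z y" and rb: "d z b = r" using gt zb z(2) by linarith+
  obtain g where g: "sp z g y" using sp_ex z(1) y by blast
  have "g ! d z a = a" using sp_between[OF g aV eqa] .
  moreover have "g ! d z b = b" using sp_between[OF g bV eqb] .
  ultimately show False using ra rb ab by simp
qed

lemma T:
  assumes a: "a \<in> C" and b: "b \<in> C" and ab: "a \<noteq> b" and v: "v \<in> V"
    and da: "d v a = m" and db: "d v b = m" and m: "m \<ge> 1"
  shows "\<exists>y\<in>C. d v y = m - 1"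
proof -
  have aV: "a \<in> V" and bV: "b \<in> V" using a b CV by auto
  obtain g where g: "sp v g a" using sp_ex v aV by blast
  obtain h where h: "sp v h b" using sp_ex v bV by blast
  have lg: "length g = Suc m" using sp_len[OF g] da by simp
  have ga: "g!m = a" using sp_last[OF g] da by simp
  let ?y = "g!(m-1)"
  have yV: "?y \<in> V" using nth_sp_V[OF g, of "m-1"] da by simp
  have dvy: "d v ?y = m - 1" using sp_nth0[OF g, of "m-1"] lg m by simp
  have "d ?y a = 1" using sp_nth[OF g, of "m-1" m] lg m ga by simp
  then have ya: "{?y, a} \<in> E" using dist_1 yV aV by blast
  have wi: "walk_in V E g" using sp_walk[OF g] by (simp add: walk_betw_def)
  have w1: "walk_betw V E v (take m g) ?y"
    using walk_in_take_drop[OF wi, of 0 "m-1"] lg m sp_hd[OF g] by simp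
  have W: "walk_betw V E ?y (rev (take m g) @ tl h) b"
    using walk_append[OF walk_rev[OF w1] sp_walk[OF h]] .
  have n1: "a \<notin> set (take m g)"
  proof
    assume "a \<in> set (take m g)"
    then obtain i where i: "i < m" "g!i = a" using lg by (auto simp: in_set_conv_nth)
    then have "d v a = i" using sp_nth0[OF g, of i] lg by simp
    then show False using i da by simp
  qed
  have n2: "a \<notin> set h"
  proof
    assume "a \<in> set h"
    then obtain i where i: "i < length h" "h!i = a" by (auto simp: in_set_conv_nth)
    then have "d v a = i" using sp_nth0[OF h i(1)] by simp
    then have "h!m = a" using i da by simp
    then show False using sp_last[OF h] db ab by simp
  qed
  have "set (rev (take m g) @ tl h) \<subseteq> V - {a}"
    using walk_betw_set[OF W] n1 n2 set_tl_sub[of h] by auto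
  then have W': "walk_betw (V - {a}) E ?y (rev (take m g) @ tl h) b" by (rule walk_betw_mono[OF W])
  have yb: "?y \<noteq> b" using dvy db m by auto
  have "{?y, b} \<in> E" using R[OF ya clique[OF a b ab] yb W'] .
  then have "?y \<in> C" using N[OF yV ya _ a b ab] by blast
  then show ?thesis using dvy by blast
qed

definition "lam v = Min ((\<lambda>a. d v a) ` C)"

lemma lam_le: "a \<in> C \<Longrightarrow> lam v \<le> d v a"
  unfolding lam_def using finC by (intro Min_le) auto

lemma lam_ex: "\<exists>a\<in>C. d v a = lam v"
proof -
  have "lam v \<in> (\<lambda>a. d v a) ` C" unfolding lam_def using finC Cne by (intro Min_in) auto
  then show ?thesis by auto
qed

lemma lam_bound: assumes v: "v \<in> V" shows "lam v \<le> r - 1"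
proof -
  obtain c1 c2 where c: "c1 \<in> C" "c2 \<in> C" "{c1,c2} \<in> E" using cc by blast
  have c12: "c1 \<noteq> c2" using edge_props(1)[OF c(3)] .
  have "d v c1 \<le> r" "d v c2 \<le> r" using center_dist c v by auto
  show ?thesis
  proof (cases "d v c1 \<le> r - 1 \<or> d v c2 \<le> r - 1")
    case True then show ?thesis using lam_le[OF c(1), of v] lam_le[OF c(2), of v] by auto
  next
    case False
    then have "d v c1 = r" "d v c2 = r" using \<open>d v c1 \<le> r\<close> \<open>d v c2 \<le> r\<close> by auto
    then obtain y where "y \<in> C" "d v y = r - 1" using T[OF c(1,2) c12 v] r2 by auto
    then show ?thesis using lam_le[of y v] by simp
  qed
qed

lemma gate_uniq:
  assumes v: "v \<in> V" and a: "a \<in> C" and b: "b \<in> C" and da: "d v a = lam v" and db: "d v b = lam v"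
  shows "a = b"
proof (rule ccontr)
  assume ab: "a \<noteq> b"
  show False
  proof (cases "lam v = 0")
    case True
    then have "v = a" "v = b" using dist_0 v a b da db CV by auto
    then show False using ab by simp
  next
    case False
    then obtain y where "y \<in> C" "d v y = lam v - 1" using T[OF a b ab v da db] by auto
    then show False using lam_le[of y v] False by simp
  qed
qed

definition "gate v = (SOME a. a \<in> C \<and> d v a = lam v)"

lemma gate: "gate v \<in> C" "d v (gate v) = lam v"
proof -
  have "\<exists>a. a \<in> C \<and> d v a = lam v" using lam_ex by blast
  from someI_ex[OF this] have "gate v \<in> C \<and> d v (gate v) = lam v" unfolding gate_def .
  then show "gate v \<in> C" "d v (gate v) = lam v" by auto
qed

lemma gateV: "gate v \<in> V" using gate CV by auto

lemma gate_eqI: "v \<in> V \<Longrightarrow> a \<in> C \<Longrightarrow> d v a = lam v \<Longrightarrow> gate v = a"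
  using gate_uniq gate by blast

lemma gate_other:
  assumes v: "v \<in> V" and a: "a \<in> C" and ne: "a \<noteq> gate v"
  shows "d v a = lam v + 1"
proof -
  have "d v a \<le> d v (gate v) + d (gate v) a" using dist_tri v a gateV CV by blast
  moreover have "d (gate v) a = 1" using dist_edge clique[OF gate(1) a] ne by auto
  moreover have "d v a \<noteq> lam v" using gate_eqI[OF v a] ne by auto
  moreover have "lam v \<le> d v a" using lam_le[OF a] .
  ultimately show ?thesis using gate(2)[of v] by linarith
qed

lemma lamC: "v \<in> C \<Longrightarrow> lam v = 0 \<and> gate v = v"
proof -
  assume v: "v \<in> C"
  then have "lam v = 0" using lam_le[OF v, of v] dist_refl CV by auto
  moreover then have "gate v = v" using gate_eqI v CV dist_refl by auto
  ultimately show ?thesis by simp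
qed

lemma lam0: "v \<in> V \<Longrightarrow> lam v = 0 \<Longrightarrow> v \<in> C"
  using gate dist_0 CV by (metis subsetD)

lemma gate_geo:
  assumes x: "x \<in> V" and z: "z \<in> V" and a: "a \<in> C" and dxa: "d x a = lam x"
    and eq: "d x z + d z a = d x a"
  shows "gate z = a" "lam z = d z a"
proof -
  have "lam x \<le> d x (gate z)" using lam_le gate by blast
  also have "\<dots> \<le> d x z + d z (gate z)" using dist_tri x z gateV by blast
  finally have "lam x \<le> d x z + lam z" using gate(2) by simp
  then have "lam z \<ge> d z a" using eq dxa by linarith
  moreover have "lam z \<le> d z a" using lam_le[OF a] .
  ultimately show "lam z = d z a" by simp
  then show "gate z = a" using gate_eqI[OF z a] by simp
qed

abbreviation "Eo \<equiv> E - {e\<in>E. e \<subseteq> center V E}"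
definition "connO u w \<longleftrightarrow> (\<exists>xs. walk_betw V Eo u xs w)"

lemma gate_edge:
  assumes e: "{x,y} \<in> E" and nC: "\<not> (x \<in> C \<and> y \<in> C)"
  shows "gate x = gate y"
proof -
  have xy: "x \<in> V" "y \<in> V" "x \<noteq> y" using edge_props e by auto
  have gen: "gate x = gate y" if e: "{x,y} \<in> E" and xC: "x \<in> C" and yC: "y \<notin> C" and xy: "x \<in> V" "y \<in> V" for x y
  proof -
    have gx: "gate x = x" using lamC xC by blast
    have "d y x = 1" using dist_edge e dist_sym xy by simp
    moreover have "lam y \<noteq> 0" using lam0 xy yC by blast
    moreover have "lam y \<le> d y x" using lam_le xC by blast
    ultimately have "d y x = lam y" by simp
    then show ?thesis using gate_eqI[OF xy(2) xC] gx by simp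
  qed
  show ?thesis
  proof (cases "x \<in> C")
    case True then show ?thesis using gen[OF e True] nC xy by blast
  next
    case xC: False
    show ?thesis
    proof (cases "y \<in> C")
      case True
      have "{y,x} \<in> E" using e by (simp add: insert_commute)
      then show ?thesis using gen[OF _ True xC] xy by simp
    next
      case yC: False
      show ?thesis
      proof (rule ccontr)
        assume ne: "gate x \<noteq> gate y"
        let ?a = "gate x" and ?b = "gate y" and ?m = "lam x"
        have m1: "?m \<ge> 1" using lam0 xy xC by (metis less_one not_le)
        obtain g where g: "sp x g ?a" using sp_ex xy gateV by blast
        have lg: "length g = Suc ?m" using sp_len[OF g] gate(2) by simp
        have ga: "g!?m = ?a" using sp_last[OF g] gate(2) by simp
        let ?p = "g!(?m - 1)"
        have pV: "?p \<in> V" using nth_sp_V[OF g, of "?m - 1"] gate(2)[of x] by simp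
        have dxp: "d x ?p = ?m - 1" using sp_nth0[OF g, of "?m - 1"] lg m1 by simp
        have "d ?p ?a = 1" using sp_nth[OF g, of "?m - 1" ?m] lg m1 ga by simp
        then have pa: "{?p, ?a} \<in> E" using dist_1 pV gateV by blast
        obtain hy where hy: "sp y hy ?b" using sp_ex xy gateV by blast
        have wi: "walk_in V E g" using sp_walk[OF g] by (simp add: walk_betw_def)
        have w1: "walk_betw V E x (take ?m g) ?p"
          using walk_in_take_drop[OF wi, of 0 "?m - 1"] lg m1 sp_hd[OF g] by simp
        have wxy: "walk_betw V E x [x,y] y" using walk_edge[OF e] xy by simp
        have W: "walk_betw V E ?p (rev (take ?m g) @ tl ([x,y] @ tl hy)) ?b"
          using walk_append[OF walk_rev[OF w1] walk_append[OF wxy sp_walk[OF hy]]] .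
        have n1: "?a \<notin> set (take ?m g)"
        proof
          assume "?a \<in> set (take ?m g)"
          then obtain i where i: "i < ?m" "g!i = ?a" using lg by (auto simp: in_set_conv_nth)
          then have "d x ?a = i" using sp_nth0[OF g, of i] lg by simp
          then show False using i gate(2) by simp
        qed
        have n2: "?a \<notin> set hy"
        proof
          assume "?a \<in> set hy"
          then obtain i where i: "i < length hy" "hy!i = ?a" by (auto simp: in_set_conv_nth)
          then have dya: "d y ?a = i" using sp_nth0[OF hy i(1)] by simp
          have "i \<le> lam y" using i(1) sp_len[OF hy] gate(2) by simp
          moreover have "lam y \<le> i" using lam_le[OF gate(1)] dya by metis
          ultimately have "d y ?a = lam y" using dya by simp
          then have "gate y = ?a" using gate_eqI[OF xy(2) gate(1)] by simp
          then show False using ne by simp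
        qed
        have n3: "?a \<noteq> y" using yC gate(1) by auto
        have "set (rev (take ?m g) @ tl ([x,y] @ tl hy)) \<subseteq> V - {?a}"
          using walk_betw_set[OF W] n1 n2 n3 set_tl_sub[of hy] by auto
        then have W': "walk_betw (V - {?a}) E ?p (rev (take ?m g) @ tl ([x,y] @ tl hy)) ?b"
          by (rule walk_betw_mono[OF W])
        have pb: "?p \<noteq> ?b"
        proof
          assume "?p = ?b"
          then have "?p \<in> C" using gate(1) by simp
          then have "lam x \<le> d x ?p" using lam_le by blast
          then show False using dxp m1 by simp
        qed
        have "{?p, ?b} \<in> E" using R[OF pa clique[OF gate(1) gate(1) ne] pb W'] .
        then have "?p \<in> C" using N[OF pV pa _ gate(1) gate(1) ne] by blast
        then have "lam x \<le> d x ?p" using lam_le by blast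
        then show False using dxp m1 by simp
      qed
    qed
  qed
qed

lemma walkO_gate:
  assumes w: "walk_betw V Eo u xs v"
  shows "gate u = gate v"
proof -
  have ne: "xs \<noteq> []" using w by (simp add: walk_betw_def walk_in_def)
  have "gate (xs!i) = gate (xs!0)" if "i < length xs" for i
    using that
  proof (induction i)
    case 0 then show ?case by simp
  next
    case (Suc i)
    have "{xs!i, xs!Suc i} \<in> Eo" using w Suc.prems unfolding walk_betw_def walk_in_def by blast
    then have "{xs!i, xs!Suc i} \<in> E" "\<not> (xs!i \<in> C \<and> xs!Suc i \<in> C)" by auto
    then have "gate (xs!i) = gate (xs!Suc i)" by (rule gate_edge)
    then show ?case using Suc by simp
  qed
  from this[of "length xs - 1"] have "gate (last xs) = gate (hd xs)"
    using ne by (simp add: hd_conv_nth last_conv_nth)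
  then show ?thesis using w by (simp add: walk_betw_def)
qed

lemma connO_gate: "connO u v \<Longrightarrow> gate u = gate v"
  unfolding connO_def using walkO_gate by blast

lemma walk_to_Eo:
  assumes w: "walk_betw V E u xs w" and nc: "\<And>i. Suc i < length xs \<Longrightarrow> \<not> (xs!i \<in> C \<and> xs!Suc i \<in> C)"
  shows "walk_betw V Eo u xs w"
proof (rule walk_betw_edges_mono[OF w])
  fix i assume i: "Suc i < length xs"
  have "{xs!i, xs!Suc i} \<in> E" using w i unfolding walk_betw_def walk_in_def by simp
  moreover have "\<not> {xs!i, xs!Suc i} \<subseteq> C" using nc[OF i] by simp
  ultimately show "{xs!i, xs!Suc i} \<in> Eo" by simp
qed

lemma connO_to_gate: assumes v: "v \<in> V" shows "connO v (gate v)"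
proof -
  obtain g where g: "sp v g (gate v)" using sp_ex v gateV by blast
  have "\<not> (g!i \<in> C \<and> g!Suc i \<in> C)" if i: "Suc i < length g" for i
  proof
    assume "g!i \<in> C \<and> g!Suc i \<in> C"
    then have "lam v \<le> d v (g!i)" using lam_le by blast
    moreover have "d v (g!i) = i" using sp_nth0[OF g] i by simp
    moreover have "i < lam v" using i sp_len[OF g] gate(2) by simp
    ultimately show False by simp
  qed
  then show ?thesis unfolding connO_def using walk_to_Eo[OF sp_walk[OF g]] by blast
qed

lemma connO_iff:
  assumes u: "u \<in> V" and w: "w \<in> V"
  shows "connO u w \<longleftrightarrow> gate u = gate w"
proof
  assume "connO u w" then show "gate u = gate w" by (rule connO_gate)
next
  assume eq: "gate u = gate w"
  obtain xs ys where xs: "walk_betw V Eo u xs (gate u)" and ys: "walk_betw V Eo w ys (gate w)"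
    using connO_to_gate u w unfolding connO_def by blast
  show "connO u w" unfolding connO_def using walk_append[OF xs walk_rev[OF ys[folded eq]]] by blast
qed

lemma radial_iff: "radial V E u \<longleftrightarrow> u \<in> V \<and> lam u = r - 1"
proof
  assume "radial V E u"
  then obtain x where x: "u \<in> V" "x \<in> C" "d u x = r" unfolding radial_def by blast
  show "u \<in> V \<and> lam u = r - 1"
  proof (cases "x = gate u")
    case True
    then have "lam u = r" using x gate(2) by simp
    then show ?thesis using lam_bound[OF x(1)] r2 by simp
  next
    case False
    then show ?thesis using gate_other[OF x(1,2) False] x by simp
  qed
next
  assume u: "u \<in> V \<and> lam u = r - 1"
  obtain c1 c2 where c: "c1 \<in> C" "c2 \<in> C" "{c1,c2} \<in> E" using cc by blast
  have "c1 \<noteq> c2" using edge_props(1)[OF c(3)] .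
  then obtain x where x: "x \<in> C" "x \<noteq> gate u" using c by metis
  then have "d u x = r" using gate_other[OF _ x] u r2 by simp
  then show "radial V E u" unfolding radial_def using u x by blast
qed

lemma diff_gate_dist:
  assumes u: "u \<in> V" and w: "w \<in> V" and ne: "gate u \<noteq> gate w"
  shows "d u w = lam u + 1 + lam w"
proof (rule antisym)
  have "d u w \<le> d u (gate u) + d (gate u) w" using dist_tri u w gateV by blast
  also have "d (gate u) w \<le> d (gate u) (gate w) + d (gate w) w" using dist_tri w gateV by blast
  finally show "d u w \<le> lam u + 1 + lam w"
    using gate(2)[of u] gate(2)[of w] dist_edge[OF clique[OF gate(1) gate(1) ne]] dist_sym[OF w gateV] by simp
next
  obtain g where g: "sp u g w" using sp_ex u w by blast
  have "\<exists>i. Suc i < length g \<and> g!i \<in> C \<and> g!Suc i \<in> C"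
  proof (rule ccontr)
    assume "\<not> ?thesis"
    then have "walk_betw V Eo u g w" using walk_to_Eo[OF sp_walk[OF g]] by blast
    then show False using walkO_gate ne by blast
  qed
  then obtain i where i: "Suc i < length g" "g!i \<in> C" "g!Suc i \<in> C" by blast
  have "d u (g!i) = i" using sp_nth0[OF g] i by simp
  then have "lam u \<le> i" using lam_le[OF i(2)] by metis
  have "d (g!Suc i) w = d u w - Suc i" using sp_nth[OF g, of "Suc i" "d u w"] i sp_len[OF g] sp_last[OF g] by simp
  moreover have "d (g!Suc i) w = d w (g!Suc i)" using dist_sym w CV i by auto
  ultimately have "lam w \<le> d u w - Suc i" using lam_le[OF i(3), of w] by simp
  then show "lam u + 1 + lam w \<le> d u w" using \<open>lam u \<le> i\<close> i sp_len[OF g] by simp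
qed

end

context bg_odd begin

definition "kapO h v = sw (h (gate v)) (r - 1) (lam v)"

lemma kapO_rng: "(\<And>a. h a \<le> r - 1) \<Longrightarrow> v \<in> V \<Longrightarrow> kapO h v < r"
  unfolding kapO_def using sw_le[of "h (gate v)" "r - 1" "r - 1" "lam v"] lam_bound r2 by fastforce

lemma good_same_gate:
  assumes u: "u \<in> V" and w: "w \<in> V" and uw: "u \<noteq> w" and gg: "gate u = gate w"
    and k: "kapO h u = kapO h w"
  shows "\<exists>xs. sp u xs w \<and> (\<forall>z\<in>internal xs. kapO h z \<noteq> kapO h u) \<and> length xs \<le> D"
proof -
  let ?a = "gate u"
  have ll: "lam u = lam w" using k gg sw_inj unfolding kapO_def by metis
  let ?m = "lam u"
  have m1: "?m \<ge> 1"
  proof (rule ccontr)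
    assume "\<not> ?m \<ge> 1"
    then have "?m = 0" by simp
    then have "u \<in> C" "w \<in> C" using lam0 u w ll by auto
    then have "gate u = u" "gate w = w" using lamC by auto
    then show False using gg uw by simp
  qed
  have aV: "?a \<in> V" using gateV .
  have dua: "d u ?a = ?m" and dwa: "d w ?a = ?m" using gate(2)[of u] gate(2)[of w] gg ll by auto
  obtain g where g: "sp u g w" using sp_ex u w by blast
  let ?k = "d u w"
  have lg: "length g = Suc ?k" using sp_len[OF g] .
  have kle: "?k \<le> 2 * ?m" using dist_tri[OF u w aV] dua dwa dist_sym[OF w aV] by simp
  have noC: "\<not> (g!i \<in> C \<and> g!Suc i \<in> C)" if i: "Suc i < length g" for i
  proof
    assume iC: "g!i \<in> C \<and> g!Suc i \<in> C"
    have "d u (g!i) = i" using sp_nth0[OF g] i by simp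
    then have "?m \<le> i" using lam_le iC by metis
    have "d (g!Suc i) w = ?k - Suc i" using sp_nth[OF g, of "Suc i" ?k] i lg sp_last[OF g] by simp
    moreover have "d (g!Suc i) w = d w (g!Suc i)" using dist_sym w CV iC by auto
    ultimately have "lam w \<le> ?k - Suc i" using lam_le[of "g!Suc i" w] iC by simp
    then show False using \<open>?m \<le> i\<close> ll kle i lg by simp
  qed
  have wi: "walk_in V E g" using sp_walk[OF g] by (simp add: walk_betw_def)
  have gz: "gate (g!p) = ?a" if p: "p \<le> ?k" for p
  proof -
    have w1: "walk_betw V E u (take (Suc p) g) (g!p)"
      using walk_in_take_drop[OF wi, of 0 p] p lg sp_hd[OF g] by simp
    have "walk_betw V Eo u (take (Suc p) g) (g!p)"
    proof (rule walk_to_Eo[OF w1])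
      fix i assume "Suc i < length (take (Suc p) g)"
      then show "\<not> (take (Suc p) g ! i \<in> C \<and> take (Suc p) g ! Suc i \<in> C)" using noC lg p by auto
    qed
    then show ?thesis using walkO_gate by simp
  qed
  have "\<forall>z\<in>internal g. kapO h z \<noteq> kapO h u"
  proof
    fix z assume "z \<in> internal g"
    then obtain p where p: "0 < p" "Suc p < length g" "g!p = z" unfolding internal_iff by blast
    have pk: "p < ?k" using p lg by simp
    have gzp: "gate z = ?a" using gz[of p] pk p by simp
    have zV: "z \<in> V" using nth_sp_V[OF g, of p] pk p by simp
    have "lam z = d z ?a" using gate(2)[of z] gzp by simp
    also have "\<dots> = d ?a z" using dist_sym zV aV by simp
    also have "\<dots> \<le> max (d ?a u - p) (d ?a w - (?k - p))" using sp_profile[OF g aV, of p] pk p by simp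
    also have "\<dots> = max (?m - p) (?m - (?k - p))" using dua dwa dist_sym u w aV by simp
    also have "\<dots> < ?m" using m1 p pk by simp
    finally have "lam z \<noteq> lam u" by simp
    then show "kapO h z \<noteq> kapO h u" using gzp sw_inj unfolding kapO_def by metis
  qed
  moreover have "length g \<le> D" using lg kle lam_bound[OF u] od by simp
  ultimately show ?thesis using g by blast
qed

lemma good_diff_gate:
  assumes u: "u \<in> V" and w: "w \<in> V" and gg: "gate u \<noteq> gate w"
    and k: "kapO h u = kapO h w"
  shows "\<exists>xs. sp u xs w \<and> (\<forall>z\<in>internal xs. kapO h z \<noteq> kapO h u) \<and>
     (length xs \<le> D \<or> (lam u = r - 1 \<and> lam w = r - 1))"
proof -
  let ?a = "gate u" and ?b = "gate w"
  have aV: "?a \<in> V" and bV: "?b \<in> V" using gateV by auto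
  have ab: "{?a, ?b} \<in> E" using clique[OF gate(1) gate(1) gg] .
  obtain g1 where g1: "sp u g1 ?a" using sp_ex u aV by blast
  obtain g2 where g2: "sp ?b g2 w" using sp_ex w bV by blast
  have l1: "length g1 = Suc (lam u)" using sp_len[OF g1] gate(2)[of u] by simp
  have db: "d ?b w = lam w" using gate(2)[of w] dist_sym[OF w bV] by simp
  have l2: "length g2 = Suc (lam w)" using sp_len[OF g2] db by simp
  have g2ne: "g2 = ?b # tl g2" using sp_hd[OF g2] l2 by (cases g2) auto
  have wab: "walk_betw V E ?a [?a, ?b] ?b" using walk_edge[OF ab] aV bV by simp
  have W: "walk_betw V E u (g1 @ tl ([?a, ?b] @ tl g2)) w"
    using walk_append[OF sp_walk[OF g1] walk_append[OF wab sp_walk[OF g2]]] .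
  have eqxs: "g1 @ tl ([?a, ?b] @ tl g2) = g1 @ g2" using g2ne by (metis append_Cons append_Nil list.sel(3))
  have xs: "sp u (g1 @ g2) w"
    using W eqxs l1 l2 diff_gate_dist[OF u w gg] by (simp add: shortest_path_def)
  have dx: "distinct (g1 @ g2)" using sp_distinct[OF xs] .
  have lx: "length (g1 @ g2) = Suc (d u w)" using sp_len[OF xs] .
  have x0: "(g1 @ g2)!0 = u" using sp_hd[OF xs] .
  have xl: "(g1 @ g2)!(length (g1 @ g2) - 1) = w" using sp_last[OF xs] lx by simp
  have "\<forall>z\<in>internal (g1 @ g2). kapO h z \<noteq> kapO h u"
  proof
    fix z assume zi: "z \<in> internal (g1 @ g2)"
    have zs: "z \<in> set (g1 @ g2)" "z \<noteq> u" "z \<noteq> w" using internal_distinct[OF dx zi] x0 xl by auto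
    then have "z \<in> set g1 \<or> z \<in> set g2" by simp
    then show "kapO h z \<noteq> kapO h u"
    proof
      assume "z \<in> set g1"
      then obtain p where p: "p < length g1" "g1!p = z" by (auto simp: in_set_conv_nth)
      have p0: "p \<noteq> 0" using p zs sp_hd[OF g1] by (metis)
      have zV: "z \<in> V" using sp_set[OF g1] p by auto
      have duz: "d u z = p" using sp_nth0[OF g1 p(1)] p by simp
      have dza: "d z ?a = lam u - p" using sp_nth[OF g1, of p "lam u"] p l1 sp_last[OF g1] gate(2)[of u] by simp
      have eq: "d u z + d z ?a = d u ?a" using duz dza gate(2)[of u] p l1 by simp
      have gz: "gate z = ?a" "lam z = d z ?a" using gate_geo[OF u zV gate(1) gate(2) eq] by auto
      have "lam z \<noteq> lam u" using gz dza p0 p l1 by simp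
      then show ?thesis using gz sw_inj unfolding kapO_def by metis
    next
      assume "z \<in> set g2"
      then obtain p where p: "p < length g2" "g2!p = z" by (auto simp: in_set_conv_nth)
      have zV: "z \<in> V" using sp_set[OF g2] p by auto
      have pl: "p < lam w"
      proof (rule ccontr)
        assume "\<not> p < lam w"
        then have "p = lam w" using p l2 by simp
        then have "z = w" using p sp_last[OF g2] db by simp
        then show False using zs by simp
      qed
      have dbz: "d ?b z = p" using sp_nth0[OF g2 p(1)] p by simp
      have dzw: "d z w = lam w - p" using sp_nth[OF g2, of p "lam w"] p l2 sp_last[OF g2] db pl by simp
      have eq: "d w z + d z ?b = d w ?b"
        using dbz dzw gate(2)[of w] dist_sym[OF zV bV] dist_sym[OF zV w] pl by simp
      have gz: "gate z = ?b" "lam z = d z ?b" using gate_geo[OF w zV gate(1) gate(2) eq] by auto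
      have "lam z \<noteq> lam w" using gz dbz dist_sym[OF zV bV] pl by simp
      then have "kapO h z \<noteq> kapO h w" using gz sw_inj unfolding kapO_def by metis
      then show ?thesis using k by simp
    qed
  qed
  moreover have "length (g1 @ g2) \<le> D \<or> (lam u = r - 1 \<and> lam w = r - 1)"
    using l1 l2 lam_bound[OF u] lam_bound[OF w] od by auto
  ultimately show ?thesis using xs by blast
qed

lemma good_odd:
  assumes u: "u \<in> V" and w: "w \<in> V" and k: "kapO h u = kapO h w"
  shows "\<exists>xs. sp u xs w \<and> (\<forall>z\<in>internal xs. kapO h z \<noteq> kapO h u) \<and>
     (length xs \<le> D \<or> (lam u = r - 1 \<and> lam w = r - 1 \<and> gate u \<noteq> gate w))"
proof (cases "u = w")
  case True
  then show ?thesis using sp_refl[OF u] D2 by (intro exI[of _ "[u]"]) simp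
next
  case False
  show ?thesis
  proof (cases "gate u = gate w")
    case True
    obtain xs where "sp u xs w" "\<forall>z\<in>internal xs. kapO h z \<noteq> kapO h u" "length xs \<le> D"
      using good_same_gate[OF u w False True k] by blast
    then show ?thesis by (intro exI[of _ xs]) simp
  next
    case gg: False
    obtain xs where "sp u xs w" "\<forall>z\<in>internal xs. kapO h z \<noteq> kapO h u"
      "length xs \<le> D \<or> (lam u = r - 1 \<and> lam w = r - 1)"
      using good_diff_gate[OF u w gg k] by blast
    then show ?thesis using gg by (intro exI[of _ xs]) auto
  qed
qed

end

context bg_odd begin

definition "cmptO u = {w\<in>V. connO u w}"

lemma cmptO_gate: "u \<in> V \<Longrightarrow> cmptO u = {w\<in>V. gate w = gate u}"
  unfolding cmptO_def using connO_iff by auto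

lemma cmptO_eq: "u \<in> V \<Longrightarrow> w \<in> V \<Longrightarrow> cmptO u = cmptO w \<longleftrightarrow> gate u = gate w"
  using cmptO_gate by auto

lemma cmptO_self: "u \<in> V \<Longrightarrow> u \<in> cmptO u" using cmptO_gate by auto

lemma components_eqO: "components V Eo = cmptO ` V"
  unfolding components_def cmptO_def connO_def by simp

definition "RCo = {K \<in> components V Eo. \<exists>u\<in>K. radial V E u}"

lemma cardC: "card C \<ge> 2"
proof -
  obtain c1 c2 where c: "c1 \<in> C" "c2 \<in> C" "{c1,c2} \<in> E" using cc by blast
  have "c1 \<noteq> c2" using edge_props(1)[OF c(3)] .
  then have "card {c1, c2} = 2" by simp
  moreover have "card {c1,c2} \<le> card C" using c finC by (intro card_mono) auto
  ultimately show ?thesis by simp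
qed

lemma deg_eqO: "deg_star_center V E = card RCo"
  unfolding deg_star_center_def RCo_def Let_def using cardC by simp

lemma RCo_fin: "finite RCo"
proof -
  have "RCo \<subseteq> cmptO ` V" unfolding RCo_def components_eqO by auto
  then show ?thesis using finV finite_subset by blast
qed

lemma RCo_rep:
  assumes "K \<in> RCo"
  shows "\<exists>u. u \<in> V \<and> lam u = r - 1 \<and> K = cmptO u"
proof -
  obtain x u where x: "x \<in> V" "K = cmptO x" "u \<in> K" "radial V E u"
    using assms unfolding RCo_def components_eqO by blast
  have uV: "u \<in> V" "lam u = r - 1" using x(4) radial_iff by auto
  have "gate u = gate x" using x cmptO_gate by auto
  then have "K = cmptO u" using x cmptO_eq uV by simp
  then show ?thesis using uV by blast
qed

lemma radial_RCo: "u \<in> V \<Longrightarrow> lam u = r - 1 \<Longrightarrow> cmptO u \<in> RCo"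
  unfolding RCo_def components_eqO using cmptO_self radial_iff by auto

lemma chi_odd_le: "chi_mu V E \<le> r"
proof (rule color_chi[where \<kappa> = "kapO (\<lambda>_. r - 1)"])
  fix v assume "v \<in> V" then show "kapO (\<lambda>_. r - 1) v < r" using kapO_rng[of "\<lambda>_. r - 1"] by simp
next
  fix u w assume uw: "u \<in> V" "w \<in> V" "kapO (\<lambda>_. r - 1) u = kapO (\<lambda>_. r - 1) w"
  obtain xs where "sp u xs w" "\<forall>z\<in>internal xs. kapO (\<lambda>_. r - 1) z \<noteq> kapO (\<lambda>_. r - 1) u"
    using good_odd[OF uw] by blast
  then show "\<exists>xs. sp u xs w \<and> (\<forall>z\<in>internal xs. kapO (\<lambda>_. r - 1) z \<noteq> kapO (\<lambda>_. r - 1) u)" by blast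
qed

lemma chik_odd_le:
  assumes card: "card RCo \<le> r"
  shows "chi_mu_k (D - 1) V E \<le> r"
proof -
  have "card RCo \<le> card {..<r}" using card by simp
  then obtain f where f: "f ` RCo \<subseteq> {..<r}" "inj_on f RCo"
    using card_le_inj[OF RCo_fin finite_lessThan] by blast
  define h where "h a = (if cmptO a \<in> RCo then f (cmptO a) else r - 1)" for a
  have hr: "h a \<le> r - 1" for a using f r2 unfolding h_def by force
  show ?thesis
  proof (rule color_chi_k[where \<kappa> = "kapO h"])
    fix v assume "v \<in> V" then show "kapO h v < r" using kapO_rng[of h, OF hr] by simp
  next
    fix u w assume uw: "u \<in> V" "w \<in> V" and k: "kapO h u = kapO h w"
    obtain xs where xs: "sp u xs w" "\<forall>z\<in>internal xs. kapO h z \<noteq> kapO h u"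
      "length xs \<le> D \<or> (lam u = r - 1 \<and> lam w = r - 1 \<and> gate u \<noteq> gate w)"
      using good_odd[OF uw k] by blast
    have "length xs \<le> D"
    proof (rule ccontr)
      assume "\<not> length xs \<le> D"
      then have *: "lam u = r - 1" "lam w = r - 1" "gate u \<noteq> gate w" using xs(3) by auto
      have R: "cmptO u \<in> RCo" "cmptO w \<in> RCo" using radial_RCo * uw by auto
      have ga: "cmptO (gate u) = cmptO u" "cmptO (gate w) = cmptO w"
        using cmptO_eq[OF gateV uw(1)] cmptO_eq[OF gateV uw(2)] lamC gate(1) by auto
      have ne: "cmptO u \<noteq> cmptO w" using cmptO_eq[OF uw] *(3) by simp
      have "kapO h u = f (cmptO u)" "kapO h w = f (cmptO w)"
        using * R ga unfolding kapO_def h_def by auto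
      then have "f (cmptO u) = f (cmptO w)" using k by simp
      then show False using f(2) R ne by (meson inj_onD)
    qed
    then show "\<exists>xs. sp u xs w \<and> (\<forall>z\<in>internal xs. kapO h z \<noteq> kapO h u) \<and> length xs \<le> Suc (D - 1)"
      using xs D2 by (intro exI[of _ xs]) simp
  qed
qed

lemma chik_odd_ge: "card RCo \<le> chi_mu_k (D - 1) V E"
proof -
  define p where "p K = (SOME u. u \<in> V \<and> lam u = r - 1 \<and> K = cmptO u)" for K
  have p: "p K \<in> V \<and> lam (p K) = r - 1 \<and> K = cmptO (p K)" if "K \<in> RCo" for K
    unfolding p_def using RCo_rep[OF that] by (rule someI_ex)
  show ?thesis
  proof (rule chi_k_ge_set[OF RCo_fin])
    fix K assume "K \<in> RCo" then show "p K \<in> V" using p by blast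
  next
    fix K K' assume KK: "K \<in> RCo" "K' \<in> RCo" "K \<noteq> K'"
    have pk: "p K \<in> V" "lam (p K) = r - 1" "K = cmptO (p K)" using p KK(1) by auto
    have pk': "p K' \<in> V" "lam (p K') = r - 1" "K' = cmptO (p K')" using p KK(2) by auto
    have "gate (p K) \<noteq> gate (p K')" using cmptO_eq[OF pk(1) pk'(1)] pk(3) pk'(3) KK(3) by simp
    then have "d (p K) (p K') = lam (p K) + 1 + lam (p K')" using diff_gate_dist pk(1) pk'(1) by blast
    then show "d (p K) (p K') = D" using pk(2) pk'(2) od r2 by simp
  next
    show "D \<ge> 1" using D2 by simp
  qed
qed

end

lemma ceil_half: "real_of_int (ceiling ((real D + 1) / 2)) = real ((D + 2) div 2)"
proof -
  let ?n = "(D + 2) div 2"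
  have a: "2 * ?n \<le> D + 2" "D + 1 \<le> 2 * ?n" by auto
  have "real_of_int (int ?n) - 1 < (real D + 1) / 2" using a(1) by simp
  moreover have "(real D + 1) / 2 \<le> real_of_int (int ?n)"
  proof -
    have "real (D + 1) \<le> real (2 * ?n)" using a(2) by (simp only: of_nat_le_iff)
    then show ?thesis by simp
  qed
  ultimately have "ceiling ((real D + 1) / 2) = int ?n" by (intro ceiling_unique) simp_all
  then show ?thesis by simp
qed

theorem theorem7p1:
  fixes V :: "'a set" and E :: "'a set set"
  assumes "connected_graph V E"
    and "block_graph V E"
    and "diam V E \<ge> 2"
  shows "chi_mu_k (diam V E - 1) V E = chi_mu V E \<longleftrightarrow>
         real (deg_star_center V E) \<le> real_of_int (ceiling ((real (diam V E) + 1) / 2))"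
proof -
  interpret bg V E using assms(1,2) by unfold_locales
  have rhs: "real (deg_star_center V E) \<le> real_of_int (ceiling ((real D + 1) / 2))
      \<longleftrightarrow> deg_star_center V E \<le> (D + 2) div 2"
    unfolding ceil_half by (simp only: of_nat_le_iff)
  have chige: "(D + 2) div 2 \<le> chi_mu V E" by (rule chi_ge_b)
  have le: "chi_mu V E \<le> chi_mu_k (D - 1) V E" by (rule chi_le_chi_k)
  have "D = 2 * r \<or> D + 1 = 2 * r" using D_le two_r by linarith
  then have main: "chi_mu_k (D - 1) V E = chi_mu V E \<longleftrightarrow> deg_star_center V E \<le> (D + 2) div 2"
  proof
    assume ev: "D = 2 * r"
    obtain c where Cc: "C = {c}" using even_center[OF ev] by blast
    interpret bg_even V E c using Cc ev assms(3) by unfold_locales auto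
    have b: "(D + 2) div 2 = r + 1" using ev by simp
    have chi: "chi_mu V E = r + 1" using chige chi_even_le b by simp
    show ?thesis
    proof (cases "card RC \<le> r + 1")
      case True
      then have "chi_mu_k (D - 1) V E \<le> r + 1" by (rule chik_even_le)
      then show ?thesis using le chi deg_eq True b by simp
    next
      case False
      then have "chi_mu_k (D - 1) V E > r + 1" using chik_even_ge by simp
      then show ?thesis using chi deg_eq False b by simp
    qed
  next
    assume od: "D + 1 = 2 * r"
    interpret bg_odd V E using od assms(3) by unfold_locales auto
    have b: "(D + 2) div 2 = r" using od by simp
    have chi: "chi_mu V E = r" using chige chi_odd_le b by simp
    show ?thesis
    proof (cases "card RCo \<le> r")
      case True
      then have "chi_mu_k (D - 1) V E \<le> r" by (rule chik_odd_le)
      then show ?thesis using le chi deg_eqO True b by simp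
    next
      case False
      then have "chi_mu_k (D - 1) V E > r" using chik_odd_ge by simp
      then show ?thesis using chi deg_eqO False b by simp
    qed
  qed
  show ?thesis using main rhs by simp
qed

end
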